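(* Let Knapsack be the parameterised query whose inputs are $n$ items with profits $p_1,\dots,p_n$ and weights $w_1,\dots,w_n$, a capacity bound $B$ and a profit threshold $T$ (all natural numbers given as $n$-bit numbers), with parameter $B$, asking whether there is $S\subseteq[n]$ with $\sum_{i\in S}p_i\ge T$ and $\sum_{i\in S}w_i\le B$. Let $\Delta_{\mathrm{KS}}$ be the set of change operations that arbitrarily replace the profit and the weight of one item, and that set $B$ or $T$ to any value. Then $(\mathrm{Knapsack},\Delta_{\mathrm{KS}})\in\mathrm{ParaSD}$.
   Context: Encoding: the domain is $[n]$; a binary relation $P$ with $(i,j)\in P$ iff the $j$-th bit of $p_i$ is $1$, analogously a binary relation $W$ for the weights, and unary relations $B$, $T$ for the bits of $B$ and $T$. The parameter $B$ may be any value up to $2^n-1$. $\mathrm{FO}{+}\mathrm{ar}$: order-invariant first-order logic with access to a linear order and compatible addition and multiplication. An advice is a computable map $\pi$ from $\mathbb{N}$ to structures over a fixed schema. A dynamic program with advice $(P,\pi)$ has auxiliary relations including a query relation and, for every change operation and auxiliary relation, an update $\mathrm{FO}{+}\mathrm{ar}$ formula over input, auxiliary and advice schema (with change parameters as free variables); states are $(D\uplus D_{\mathrm{adv}},\mathcal{I},\mathcal{A},\pi(k_{\max}))$ with arithmetic on $D\uplus D_{\mathrm{adv}}$ and auxiliary relations over $D\uplus D_{\mathrm{adv}}$; after a change each auxiliary relation is replaced by the result of its update formula on the old state. $(Q,\kappa,\Delta)\in\mathrm{ParaSD}$ if for some computable $f$ there is such a program with $|\pi(k)|\le f(k)$ for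 all $k$ such that, for every empty initial input, every $k_{\max}$ and every change sequence over $\Delta$ keeping the parameter at most $k_{\max}$ after every prefix, the query relation (starting from empty auxiliary relations and advice $\pi(k_{\max})$) equals the query answer on the current input. *)

theory Defs
  imports Main "HOL-Library.Nat_Bijection"
begin

datatype recf = RZ | RS | RProj nat | RComp recf "recf list" | RPrim recf recf | RMn recf

inductive reval :: "recf \<Rightarrow> nat list \<Rightarrow> nat \<Rightarrow> bool" where
  "reval RZ xs 0"
| "reval RS (x # xs) (Suc x)"
| "i < length xs \<Longrightarrow> reval (RProj i) xs (xs ! i)"
| "list_all2 (\<lambda>g y. reval g xs y) gs ys \<Longrightarrow> reval f ys z \<Longrightarrow> reval (RComp f gs) xs z"
| "reval f xs z \<Longrightarrow> reval (RPrim f g) (0 # xs) z"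
| "reval (RPrim f g) (n # xs) y \<Longrightarrow> reval g (y # n # xs) z \<Longrightarrow> reval (RPrim f g) (Suc n # xs) z"
| "reval f (n # xs) 0 \<Longrightarrow> (\<forall>m<n. \<exists>y. 0 < y \<and> reval f (m # xs) y) \<Longrightarrow> reval (RMn f) xs n"

definition computable1 :: "(nat \<Rightarrow> nat) \<Rightarrow> bool" where
  "computable1 g \<longleftrightarrow> (\<exists>r. \<forall>a. reval r [a] (g a))"

definition computable2 :: "(nat \<Rightarrow> nat \<Rightarrow> nat) \<Rightarrow> bool" where
  "computable2 g \<longleftrightarrow> (\<exists>r. \<forall>a b. reval r [a, b] (g a b))"

text \<open>Relation symbols: input relations P, W (binary), B, T (unary); auxiliary
  relations; advice relations; unary relational change parameters (new bit sets).\<close>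
datatype sym = SP | SW | SB | ST | SAux nat | SAdv nat | SCh nat

text \<open>Terms: first-order variables and element change parameters.\<close>
datatype tm = V nat | C nat

datatype fo =
    Atom sym "tm list"
  | Eq tm tm
  | Lt tm tm
  | Plus tm tm tm     \<comment> \<open>x + y = z\<close>
  | Times tm tm tm    \<comment> \<open>x * y = z\<close>
  | Neg fo
  | Conj fo fo
  | Exi nat fo

fun tval :: "nat list \<Rightarrow> (nat \<Rightarrow> nat) \<Rightarrow> tm \<Rightarrow> nat" where
  "tval ce env (V x) = env x"
| "tval ce env (C i) = (if i < length ce then ce ! i else 0)"

fun sat :: "nat \<Rightarrow> (sym \<Rightarrow> nat list set) \<Rightarrow> nat list \<Rightarrow> (nat \<Rightarrow> nat) \<Rightarrow> fo \<Rightarrow> bool" where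
  "sat N I ce env (Atom R ts) = (map (tval ce env) ts \<in> I R)"
| "sat N I ce env (Eq a b) = (tval ce env a = tval ce env b)"
| "sat N I ce env (Lt a b) = (tval ce env a < tval ce env b)"
| "sat N I ce env (Plus a b c) = (tval ce env a + tval ce env b = tval ce env c)"
| "sat N I ce env (Times a b c) = (tval ce env a * tval ce env b = tval ce env c)"
| "sat N I ce env (Neg \<phi>) = (\<not> sat N I ce env \<phi>)"
| "sat N I ce env (Conj \<phi> \<psi>) = (sat N I ce env \<phi> \<and> sat N I ce env \<psi>)"
| "sat N I ce env (Exi x \<phi>) = (\<exists>d<N. sat N I ce (env(x := d)) \<phi>)"

record ks_input =
  kp :: "nat \<Rightarrow> nat"
  kw :: "nat \<Rightarrow> nat"
  kB :: nat
  kT :: nat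

definition ks_empty :: ks_input where
  "ks_empty = \<lparr>kp = (\<lambda>_. 0), kw = (\<lambda>_. 0), kB = 0, kT = 0\<rparr>"

definition knapsack :: "nat \<Rightarrow> ks_input \<Rightarrow> bool" where
  "knapsack n x \<longleftrightarrow> (\<exists>S \<subseteq> {0..<n}. (\<Sum>i\<in>S. kp x i) \<ge> kT x \<and> (\<Sum>i\<in>S. kw x i) \<le> kB x)"

datatype ks_change = ChItem nat nat nat | ChB nat | ChT nat

datatype ks_op = OpItem | OpB | OpT

fun ks_valid :: "nat \<Rightarrow> ks_change \<Rightarrow> bool" where
  "ks_valid n (ChItem i p w) \<longleftrightarrow> i < n \<and> p < 2 ^ n \<and> w < 2 ^ n"
| "ks_valid n (ChB b) \<longleftrightarrow> b < 2 ^ n"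
| "ks_valid n (ChT t) \<longleftrightarrow> t < 2 ^ n"

fun ks_apply :: "ks_change \<Rightarrow> ks_input \<Rightarrow> ks_input" where
  "ks_apply (ChItem i p w) x = x\<lparr>kp := (kp x)(i := p), kw := (kw x)(i := w)\<rparr>"
| "ks_apply (ChB b) x = x\<lparr>kB := b\<rparr>"
| "ks_apply (ChT t) x = x\<lparr>kT := t\<rparr>"

fun ks_op_of :: "ks_change \<Rightarrow> ks_op" where
  "ks_op_of (ChItem _ _ _) = OpItem"
| "ks_op_of (ChB _) = OpB"
| "ks_op_of (ChT _) = OpT"

definition bitset :: "nat \<Rightarrow> nat \<Rightarrow> nat set" where
  "bitset n a = {j. j < n \<and> bit a j}"

fun ks_elems :: "ks_change \<Rightarrow> nat list" where
  "ks_elems (ChItem i _ _) = [i]"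
| "ks_elems (ChB _) = []"
| "ks_elems (ChT _) = []"

fun ks_sets :: "nat \<Rightarrow> ks_change \<Rightarrow> nat set list" where
  "ks_sets n (ChItem _ p w) = [bitset n p, bitset n w]"
| "ks_sets n (ChB b) = [bitset n b]"
| "ks_sets n (ChT t) = [bitset n t]"

text \<open>An advice structure: domain size m (elements 0..<m) and relations.\<close>
type_synonym advice = "nat \<times> (nat \<Rightarrow> nat list set)"

definition wf_advice :: "nat list \<Rightarrow> advice \<Rightarrow> bool" where
  "wf_advice adv_ar a \<longleftrightarrow> (\<forall>j. \<forall>t\<in>snd a j. j < length adv_ar \<and> length t = adv_ar ! j
                                     \<and> (\<forall>x\<in>set t. x < fst a))"

definition computable_advice :: "nat list \<Rightarrow> (nat \<Rightarrow> advice) \<Rightarrow> bool" where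
  "computable_advice adv_ar \<pi> \<longleftrightarrow> computable1 (\<lambda>k. fst (\<pi> k)) \<and>
     (\<forall>j<length adv_ar. computable2 (\<lambda>k c. if list_decode c \<in> snd (\<pi> k) j then 1 else 0))"

text \<open>The full structure over D \<uplus> D_adv = {0..<n+m}: input elements are 0..<n,
  advice elements are n..<n+m.\<close>
definition ks_struct :: "nat \<Rightarrow> ks_input \<Rightarrow> (nat \<Rightarrow> nat list set) \<Rightarrow> advice
                         \<Rightarrow> nat set list \<Rightarrow> sym \<Rightarrow> nat list set" where
  "ks_struct n x aux a cs R = (case R of
      SP \<Rightarrow> {[i, j] | i j. i < n \<and> j < n \<and> bit (kp x i) j}
    | SW \<Rightarrow> {[i, j] | i j. i < n \<and> j < n \<and> bit (kw x i) j}
    | SB \<Rightarrow> {[j] | j. j < n \<and> bit (kB x) j}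
    | ST \<Rightarrow> {[j] | j. j < n \<and> bit (kT x) j}
    | SAux j \<Rightarrow> aux j
    | SAdv j \<Rightarrow> map (\<lambda>v. v + n) ` snd a j
    | SCh k \<Rightarrow> (if k < length cs then {[j] | j. j \<in> cs ! k} else {}))"

text \<open>One step: every auxiliary relation is replaced by the result of its update
  formula evaluated on the old state (tuple variables are V 0, ..., V (r-1)).\<close>
definition ks_step :: "nat list \<Rightarrow> (ks_op \<Rightarrow> nat \<Rightarrow> fo) \<Rightarrow> nat \<Rightarrow> advice
                       \<Rightarrow> ks_change \<Rightarrow> ks_input \<times> (nat \<Rightarrow> nat list set)
                       \<Rightarrow> ks_input \<times> (nat \<Rightarrow> nat list set)" where
  "ks_step aux_ar upd n a c st =
     (let (x, aux) = st; N = n + fst a in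
      (ks_apply c x,
       \<lambda>j. if j < length aux_ar then
              {t. length t = aux_ar ! j \<and> (\<forall>v\<in>set t. v < N) \<and>
                  sat N (ks_struct n x aux a (ks_sets n c)) (ks_elems c)
                      (\<lambda>v. if v < length t then t ! v else 0) (upd (ks_op_of c) j)}
            else {}))"

definition ks_run :: "nat list \<Rightarrow> (ks_op \<Rightarrow> nat \<Rightarrow> fo) \<Rightarrow> nat \<Rightarrow> advice
                      \<Rightarrow> ks_change list \<Rightarrow> ks_input \<times> (nat \<Rightarrow> nat list set)" where
  "ks_run aux_ar upd n a cs = fold (ks_step aux_ar upd n a) cs (ks_empty, \<lambda>_. {})"

text \<open>(Knapsack, B, Delta_KS) is in ParaSD. Auxiliary relation 0 (arity 0) is the
  query relation.\<close>
definition knapsack_in_ParaSD :: bool where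
  "knapsack_in_ParaSD \<longleftrightarrow>
    (\<exists>(aux_ar :: nat list) (adv_ar :: nat list) (\<pi> :: nat \<Rightarrow> advice)
       (upd :: ks_op \<Rightarrow> nat \<Rightarrow> fo) (f :: nat \<Rightarrow> nat).
       aux_ar \<noteq> [] \<and> aux_ar ! 0 = 0 \<and>
       computable1 f \<and> computable_advice adv_ar \<pi> \<and>
       (\<forall>k. wf_advice adv_ar (\<pi> k) \<and> fst (\<pi> k) \<le> f k) \<and>
       (\<forall>n \<ge> 1. \<forall>kmax. \<forall>cs :: ks_change list.
          cs \<noteq> [] \<longrightarrow> (\<forall>c\<in>set cs. ks_valid n c) \<longrightarrow>
          (\<forall>l\<le>length cs. kB (fold ks_apply (take l cs) ks_empty) \<le> kmax) \<longrightarrow>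
          (([] \<in> snd (ks_run aux_ar upd n (\<pi> kmax) cs) 0) \<longleftrightarrow>
             knapsack n (fold ks_apply cs ks_empty))))"

end

theory Submission
  imports Defs
begin


lemma reval_comp1: "reval g xs y \<Longrightarrow> reval f [y] z \<Longrightarrow> reval (RComp f [g]) xs z"
  by (rule reval.intros(4)) auto
lemma reval_comp2: "reval g1 xs y1 \<Longrightarrow> reval g2 xs y2 \<Longrightarrow> reval f [y1,y2] z \<Longrightarrow> reval (RComp f [g1,g2]) xs z"
  by (rule reval.intros(4)) auto
lemma reval_proj: "i < length xs \<Longrightarrow> y = xs ! i \<Longrightarrow> reval (RProj i) xs y"
  using reval.intros(3) by auto
lemma reval_Z: "y = 0 \<Longrightarrow> reval RZ xs y" using reval.intros(1) by auto
lemma reval_S: "y = Suc x \<Longrightarrow> reval RS (x # xs) y" using reval.intros(2) by auto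

lemma reval_prim:
  assumes "reval f xs F" 
    and "\<And>y n. reval g (y # n # xs) (G n y)"
  shows "reval (RPrim f g) (n # xs) (rec_nat F G n)"
proof (induction n)
  case 0 then show ?case using assms(1) reval.intros(5) by auto
next
  case (Suc n) then show ?case using assms(2) reval.intros(6) by auto
qed

definition "cnst1 = RComp RS [RZ]"
lemma cnst1: assumes "z = 1" shows "reval cnst1 xs z"
  unfolding cnst1_def by (rule reval_comp1[OF reval_Z reval_S]) (auto simp: assms)

definition "radd = RPrim (RProj 0) (RComp RS [RProj 0])"
lemma radd: assumes "z = a + b" shows "reval radd [a, b] z"
proof -
  have "reval radd [a, b] (rec_nat b (\<lambda>n y. Suc y) a)"
    unfolding radd_def by (rule reval_prim) (auto intro!: reval_proj reval_comp1 reval_S)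
  moreover have "rec_nat b (\<lambda>n y. Suc y) a = a + b" by (induction a) auto
  ultimately show ?thesis using assms by simp
qed

definition "rpred = RPrim RZ (RProj 1)"
lemma rpred: assumes "z = a - 1" shows "reval rpred [a] z"
proof -
  have "reval rpred [a] (rec_nat 0 (\<lambda>n y. n) a)"
    unfolding rpred_def by (rule reval_prim) (auto intro!: reval_proj reval_Z)
  moreover have "rec_nat 0 (\<lambda>n y. n) a = a - 1" by (cases a) auto
  ultimately show ?thesis using assms by simp
qed

definition "rsub = RPrim (RProj 0) (RComp rpred [RProj 0])"
lemma rsub: assumes "z = a - b" shows "reval rsub [b, a] z"
proof -
  have "reval rsub [b, a] (rec_nat a (\<lambda>n y. y - 1) b)"
    unfolding rsub_def by (rule reval_prim) (auto intro!: reval_proj reval_comp1 rpred)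
  moreover have "rec_nat a (\<lambda>n y. y - 1) b = a - b" by (induction b) auto
  ultimately show ?thesis using assms by simp
qed

definition "reqp = RComp rsub [RComp radd [RComp rsub [RProj 1, RProj 0], RComp rsub [RProj 0, RProj 1]], cnst1]"
lemma reqp: assumes "z = (if a = b then 1 else 0)" shows "reval reqp [a, b] z"
proof -
  have "reval reqp [a, b] (1 - ((a - b) + (b - a)))"
  proof -
    have 1: "reval (RComp rsub [RProj 1, RProj 0]) [a, b] (a - b)"
      by (rule reval_comp2[OF reval_proj reval_proj rsub]) auto
    have 2: "reval (RComp rsub [RProj 0, RProj 1]) [a, b] (b - a)"
      by (rule reval_comp2[OF reval_proj reval_proj rsub]) auto
    have 3: "reval (RComp radd [RComp rsub [RProj 1, RProj 0], RComp rsub [RProj 0, RProj 1]]) [a, b] ((a - b) + (b - a))"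
      by (rule reval_comp2[OF 1 2 radd]) auto
    show ?thesis unfolding reqp_def
      by (rule reval_comp2[OF 3 cnst1 rsub]) auto
  qed
  moreover have "1 - ((a - b) + (b - a)) = (if a = b then 1 else 0)" by auto
  ultimately show ?thesis using assms by simp
qed

definition "rpow2 = RPrim cnst1 (RComp radd [RProj 0, RProj 0])"
lemma rpow2: assumes "z = 2 ^ a" shows "reval rpow2 [a] z"
proof -
  have "reval rpow2 [a] (rec_nat 1 (\<lambda>n y. y + y) a)"
    unfolding rpow2_def by (rule reval_prim) (auto intro!: reval_proj reval_comp2 radd cnst1)
  moreover have "rec_nat 1 (\<lambda>n y. y + y) a = (2::nat) ^ a" by (induction a) auto
  ultimately show ?thesis using assms by simp
qed

definition "rtri = RPrim RZ (RComp radd [RProj 0, RComp RS [RProj 1]])"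
lemma rtri: assumes "z = triangle a" shows "reval rtri [a] z"
proof -
  have "reval rtri [a] (rec_nat 0 (\<lambda>n y. y + Suc n) a)"
    unfolding rtri_def by (rule reval_prim) (auto intro!: reval_proj reval_comp2 reval_comp1 radd reval_Z reval_S)
  moreover have "rec_nat 0 (\<lambda>n y. y + Suc n) a = triangle a" by (induction a) auto
  ultimately show ?thesis using assms by simp
qed

definition "rpenc = RComp radd [RComp rtri [RComp radd [RProj 0, RProj 1]], RProj 0]"
lemma rpenc: assumes "z = prod_encode (a, b)" shows "reval rpenc [a, b] z"
proof -
  have 1: "reval (RComp radd [RProj 0, RProj 1]) [a,b] (a+b)"
    by (rule reval_comp2[OF reval_proj reval_proj radd]) auto
  have 2: "reval (RComp rtri [RComp radd [RProj 0, RProj 1]]) [a,b] (triangle (a+b))"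
    by (rule reval_comp1[OF 1 rtri]) simp
  show ?thesis unfolding rpenc_def
    by (rule reval_comp2[OF 2 reval_proj radd]) (auto simp: assms prod_encode_def)
qed

definition "enc j = list_encode [j, 2 ^ j]"
definition "renc = RComp RS [RComp rpenc [RProj 0, RComp RS [RComp rpenc [RComp rpow2 [RProj 0], RZ]]]]"
lemma renc: assumes "z = enc j" shows "reval renc [j] z"
proof -
  have 1: "reval (RComp rpow2 [RProj 0]) [j] (2^j)"
    by (rule reval_comp1[OF reval_proj rpow2]) auto
  have 2: "reval (RComp rpenc [RComp rpow2 [RProj 0], RZ]) [j] (prod_encode (2^j, 0))"
    by (rule reval_comp2[OF 1 reval_Z rpenc]) auto
  have 3: "reval (RComp RS [RComp rpenc [RComp rpow2 [RProj 0], RZ]]) [j] (Suc (prod_encode (2^j, 0)))"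
    by (rule reval_comp1[OF 2 reval_S]) auto
  have 4: "reval (RComp rpenc [RProj 0, RComp RS [RComp rpenc [RComp rpow2 [RProj 0], RZ]]]) [j]
     (prod_encode (j, Suc (prod_encode (2^j, 0))))"
    by (rule reval_comp2[OF reval_proj 3 rpenc]) auto
  show ?thesis unfolding renc_def
    by (rule reval_comp1[OF 4 reval_S]) (simp add: assms enc_def)
qed

lemma list_decode_eq_iff: "list_decode c = l \<longleftrightarrow> c = list_encode l"
  by (metis list_decode_inverse list_encode_inverse)

definition "rmem = RPrim (RComp reqp [RProj 0, RComp renc [RZ]])
   (RComp radd [RProj 0, RComp reqp [RProj 2, RComp renc [RComp RS [RProj 1]]]])"

definition advrel :: "nat \<Rightarrow> nat list set" where
  "advrel k = {[j, 2 ^ j] | j. j \<le> k}"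

lemma rmem: "reval rmem [k, c] (if list_decode c \<in> advrel k then 1 else 0)"
proof -
  have "reval rmem [k, c] (rec_nat (if c = enc 0 then 1 else 0) (\<lambda>n y. y + (if c = enc (Suc n) then 1 else 0)) k)"
    unfolding rmem_def
  proof (rule reval_prim)
    show "reval (RComp reqp [RProj 0, RComp renc [RZ]]) [c] (if c = enc 0 then 1 else 0)"
      by (rule reval_comp2[OF reval_proj reval_comp1[OF reval_Z renc] reqp]) auto
    fix n y
    have 1: "reval (RComp renc [RComp RS [RProj 1]]) [y, n, c] (enc (Suc n))"
      by (rule reval_comp1[OF reval_comp1[OF reval_proj reval_S] renc]) auto
    have 2: "reval (RComp reqp [RProj 2, RComp renc [RComp RS [RProj 1]]]) [y, n, c] (if c = enc (Suc n) then 1 else 0)"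
      by (rule reval_comp2[OF reval_proj 1 reqp]) auto
    show "reval (RComp radd [RProj 0, RComp reqp [RProj 2, RComp renc [RComp RS [RProj 1]]]]) [y, n, c]
       (y + (if c = enc (Suc n) then 1 else 0))"
      by (rule reval_comp2[OF reval_proj 2 radd]) auto
  qed
  moreover have "rec_nat (if c = enc 0 then 1 else 0::nat) (\<lambda>n y. y + (if c = enc (Suc n) then 1 else 0)) k
      = (if list_decode c \<in> advrel k then 1 else 0)"
  proof (induction k)
    case 0
    have "list_decode c \<in> advrel 0 \<longleftrightarrow> c = enc 0"
    proof
      assume "list_decode c \<in> advrel 0"
      then have "list_decode c = [0, 1]" unfolding advrel_def by auto
      then have "list_encode (list_decode c) = list_encode [0, 1]" by simp
      then show "c = enc 0" unfolding enc_def by simp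
    next
      assume "c = enc 0" then show "list_decode c \<in> advrel 0" unfolding advrel_def enc_def by auto
    qed
    then show ?case by simp
  next
    case (Suc k)
    have eq: "list_decode c \<in> advrel (Suc k) \<longleftrightarrow> list_decode c \<in> advrel k \<or> c = enc (Suc k)"
      unfolding advrel_def enc_def apply (auto simp del: list_encode.simps simp: le_Suc_eq list_decode_eq_iff)
      by (metis power_Suc)
    have "\<not> (list_decode c \<in> advrel k \<and> c = enc (Suc k))"
      unfolding advrel_def enc_def by (auto simp del: list_encode.simps)
    then show ?case using Suc eq by auto
  qed
  ultimately show ?thesis by simp
qed


lemma ma: "(a::nat) mod 2 ^ Suc j = (if bit a j then 2 ^ j else 0) + a mod 2 ^ j"
proof -
  have "a mod (2^j * 2) = 2^j * (a div 2^j mod 2) + a mod 2^j" by (rule mod_mult2_eq)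
  moreover have "a div 2^j mod 2 = (if bit a j then 1 else 0)"
    by (simp add: bit_iff_odd odd_iff_mod_2_eq_one)
  ultimately show ?thesis by (simp add: mult.commute)
qed
lemma bitlt: "(a::nat) < 2 ^ N \<Longrightarrow> b < 2 ^ N \<Longrightarrow> a < b \<longleftrightarrow> (\<exists>j<N. \<not> bit a j \<and> bit b j \<and> (\<forall>l. j < l \<and> l < N \<longrightarrow> (bit a l \<longleftrightarrow> bit b l)))"
proof (induction N arbitrary: a b)
  case 0 then show ?case by simp
next
  case (Suc N)
  have ha: "a = (if bit a N then 2^N else 0) + a mod 2^N"
    using ma[of a N] Suc.prems by simp
  have hb: "b = (if bit b N then 2^N else 0) + b mod 2^N"
    using ma[of b N] Suc.prems by simp
  have IH: "a mod 2^N < b mod 2^N \<longleftrightarrow> (\<exists>j<N. \<not> bit (a mod 2^N) j \<and> bit (b mod 2^N) j \<and> (\<forall>l. j < l \<and> l < N \<longrightarrow> (bit (a mod 2^N) l \<longleftrightarrow> bit (b mod 2^N) l)))"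
    by (rule Suc.IH) auto
  have bm: "\<And>x l. l < N \<Longrightarrow> bit (x mod 2^N) l = bit (x::nat) l"
    by (simp add: bit_take_bit_iff flip: take_bit_eq_mod)
  have lt1: "a mod 2^N < 2^N" "b mod 2^N < 2^N" by auto
  show ?case
  proof (cases "bit a N = bit b N")
    case True
    then have "a < b \<longleftrightarrow> a mod 2^N < b mod 2^N" using ha hb
      by (smt (verit) add_less_cancel_left)
    also have "\<dots> \<longleftrightarrow> (\<exists>j<N. \<not> bit a j \<and> bit b j \<and> (\<forall>l. j < l \<and> l < N \<longrightarrow> (bit a l \<longleftrightarrow> bit b l)))"
      unfolding IH apply (rule iffI)
      apply (elim exE conjE, rule_tac x=j in exI, simp add: bm)
      apply (elim exE conjE, rule_tac x=j in exI, simp add: bm)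
      done
    also have "\<dots> \<longleftrightarrow> (\<exists>j<Suc N. \<not> bit a j \<and> bit b j \<and> (\<forall>l. j < l \<and> l < Suc N \<longrightarrow> (bit a l \<longleftrightarrow> bit b l)))"
      using True by (auto simp: less_Suc_eq) 
    finally show ?thesis .
  next
    case False
    show ?thesis
    proof (cases "bit b N")
      case True
      with False have "a < b" using ha hb lt1 by (smt (verit) add_0 trans_less_add1)
      moreover have "\<exists>j<Suc N. \<not> bit a j \<and> bit b j \<and> (\<forall>l. j < l \<and> l < Suc N \<longrightarrow> (bit a l \<longleftrightarrow> bit b l))"
        using True False by (intro exI[of _ N]) auto
      ultimately show ?thesis by simp
    next
      case bF: False
      with False have "b < a" using ha hb lt1 by (smt (verit) add_0 trans_less_add1)
      moreover have "\<not> (\<exists>j<Suc N. \<not> bit a j \<and> bit b j \<and> (\<forall>l. j < l \<and> l < Suc N \<longrightarrow> (bit a l \<longleftrightarrow> bit b l)))"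
        using bF False by (auto simp: less_Suc_eq) 
      ultimately show ?thesis by simp
    qed
  qed
qed
definition carry :: "nat \<Rightarrow> nat \<Rightarrow> nat \<Rightarrow> bool" where
  "carry a b j \<longleftrightarrow> 2 ^ j \<le> a mod 2 ^ j + b mod 2 ^ j"

lemma bit_add_carry: "bit (a + b) j \<longleftrightarrow> ((bit a j \<noteq> bit b j) \<noteq> carry a b j)"
proof -
  have lt: "a mod 2 ^ j + b mod 2 ^ j < 2 * 2 ^ j"
    using mod_less_divisor[of "2^j" a] mod_less_divisor[of "2^j" b] by (simp add: add_strict_mono mult_2)
  have "(a + b) div 2 ^ j = a div 2 ^ j + b div 2 ^ j + (a mod 2 ^ j + b mod 2 ^ j) div 2 ^ j"
    by (rule div_add1_eq)
  moreover have "(a mod 2 ^ j + b mod 2 ^ j) div 2 ^ j = (if carry a b j then 1 else 0)"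
    using lt unfolding carry_def
    by (smt (verit, best) Euclidean_Rings.div_eq_0_iff
    bot_nat_0.not_eq_extremum div_greater_zero_iff less_mult_imp_div_less
    mod2_gr_0 mod_eq_self_iff_div_eq_0 power_eq_0_iff)
  ultimately show ?thesis by (auto simp: bit_iff_odd)
qed

lemma carry_Suc: "carry a b (Suc j) \<longleftrightarrow> (bit a j \<and> bit b j) \<or> ((bit a j \<or> bit b j) \<and> carry a b j)"
proof -
  have lta: "a mod 2 ^ j < 2 ^ j" and ltb: "b mod 2 ^ j < 2 ^ j" by auto
  show ?thesis unfolding carry_def ma[of a] ma[of b] apply (auto simp: mult_2) using lta ltb by linarith+
qed

lemma carry_iff: "carry a b j \<longleftrightarrow> (\<exists>k<j. bit a k \<and> bit b k \<and> (\<forall>l. k < l \<and> l < j \<longrightarrow> bit a l \<or> bit b l))"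
proof (induction j)
  case 0 then show ?case by (simp add: carry_def)
next
  case (Suc j)
  show ?case unfolding carry_Suc Suc
    by (auto simp: less_Suc_eq)
qed

lemma ne0_bit: "(x::nat) \<noteq> 0 \<longleftrightarrow> (\<exists>i. bit x i)"
  using bit_eq_iff[of x 0] by auto
lemma ge_pow_iff: "2 ^ n \<le> (M::nat) \<longleftrightarrow> (\<exists>j\<ge>n. bit M j)"
proof -
  have "2 ^ n \<le> M \<longleftrightarrow> M div 2 ^ n \<noteq> 0" by (simp add: div_eq_0_iff not_less)
  also have "\<dots> \<longleftrightarrow> (\<exists>i. bit (M div 2 ^ n) i)" by (rule ne0_bit)
  also have "\<dots> \<longleftrightarrow> (\<exists>j\<ge>n. bit M j)"
  proof -
    have e: "\<And>i. bit (M div 2^n) i = bit M (n + i)" by (simp add: bit_iff_odd div_exp_eq)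
    show ?thesis unfolding e
    proof
      assume "\<exists>i. bit M (n + i)" then show "\<exists>j\<ge>n. bit M j" using le_add1 by blast
    next
      assume "\<exists>j\<ge>n. bit M j"
      then obtain j where "j \<ge> n" "bit M j" by auto
      then show "\<exists>i. bit M (n + i)" by (intro exI[of _ "j - n"]) simp
    qed
  qed
  finally show ?thesis .
qed

lemma bit_cap: "bit (min M (2 ^ n)) j \<longleftrightarrow> (if 2 ^ n \<le> (M::nat) then j = n else bit M j)"
  by (auto simp: min_def bit_exp_iff)


definition FOr where "FOr a b = Neg (Conj (Neg a) (Neg b))"
definition FImp where "FImp a b = Neg (Conj a (Neg b))"
definition FIff where "FIff a b = Conj (FImp a b) (FImp b a)"
definition FAll where "FAll x a = Neg (Exi x (Neg a))"
definition FXor where "FXor a b = Neg (FIff a b)"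

lemma sat_derived[simp]:
  "sat N I ce env (FOr a b) = (sat N I ce env a \<or> sat N I ce env b)"
  "sat N I ce env (FImp a b) = (sat N I ce env a \<longrightarrow> sat N I ce env b)"
  "sat N I ce env (FIff a b) = (sat N I ce env a = sat N I ce env b)"
  "sat N I ce env (FAll x a) = (\<forall>d<N. sat N I ce (env(x:=d)) a)"
  "sat N I ce env (FXor a b) = (sat N I ce env a \<noteq> sat N I ce env b)"
  by (auto simp: FOr_def FImp_def FIff_def FAll_def FXor_def)

type_synonym ngen = "nat \<Rightarrow> nat \<Rightarrow> fo"
type_synonym bgen = "nat \<Rightarrow> fo"

definition inr :: "nat \<Rightarrow> nat \<Rightarrow> (nat \<Rightarrow> nat) \<Rightarrow> bool" where
  "inr N l e \<longleftrightarrow> (\<forall>z<l. e z < N)"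
definition dep :: "nat \<Rightarrow> ((nat \<Rightarrow> nat) \<Rightarrow> 'a) \<Rightarrow> bool" where
  "dep k f \<longleftrightarrow> (\<forall>e e'. (\<forall>z<k. e z = e' z) \<longrightarrow> f e = f e')"

definition numg :: "nat \<Rightarrow> (sym \<Rightarrow> nat list set) \<Rightarrow> nat list \<Rightarrow> nat \<Rightarrow> ngen \<Rightarrow> ((nat \<Rightarrow> nat) \<Rightarrow> nat) \<Rightarrow> bool" where
  "numg N I ce k \<phi> v \<longleftrightarrow> (\<forall>l e y. k \<le> l \<longrightarrow> y < l \<longrightarrow> inr N l e \<longrightarrow> (sat N I ce e (\<phi> l y) \<longleftrightarrow> bit (v e) (e y)))
      \<and> dep k v \<and> (\<forall>e. v e < 2 ^ N)"

definition boolg :: "nat \<Rightarrow> (sym \<Rightarrow> nat list set) \<Rightarrow> nat list \<Rightarrow> nat \<Rightarrow> bgen \<Rightarrow> ((nat \<Rightarrow> nat) \<Rightarrow> bool) \<Rightarrow> bool" where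
  "boolg N I ce k \<psi> P \<longleftrightarrow> (\<forall>l e. k \<le> l \<longrightarrow> inr N l e \<longrightarrow> (sat N I ce e (\<psi> l) \<longleftrightarrow> P e)) \<and> dep k P"

lemma inr_upd: "inr N l e \<Longrightarrow> d < N \<Longrightarrow> inr N (Suc l) (e(l:=d))"
  unfolding inr_def by (auto simp: less_Suc_eq)
lemma inr_mono: "inr N l e \<Longrightarrow> l' \<le> l \<Longrightarrow> inr N l' e"
  unfolding inr_def by auto
lemma inrD: "inr N l e \<Longrightarrow> z < l \<Longrightarrow> e z < N"
  unfolding inr_def by auto
lemma dep_upd: "dep k f \<Longrightarrow> k \<le> l \<Longrightarrow> f (e(l:=d)) = f e"
  unfolding dep_def by auto
lemma dep_mono: "dep k f \<Longrightarrow> k \<le> k' \<Longrightarrow> dep k' f"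
  unfolding dep_def by auto
lemma numgD: "numg N I ce k \<phi> v \<Longrightarrow> k \<le> l \<Longrightarrow> y < l \<Longrightarrow> inr N l e \<Longrightarrow> sat N I ce e (\<phi> l y) \<longleftrightarrow> bit (v e) (e y)"
  unfolding numg_def by blast
lemma numg_dep: "numg N I ce k \<phi> v \<Longrightarrow> dep k v"
  unfolding numg_def by blast
lemma numg_bound: "numg N I ce k \<phi> v \<Longrightarrow> v e < 2 ^ N"
  unfolding numg_def by blast
lemma numg_mono: "numg N I ce k \<phi> v \<Longrightarrow> k \<le> k' \<Longrightarrow> numg N I ce k' \<phi> v"
  unfolding numg_def using dep_mono by (metis order_trans)
lemma boolgD: "boolg N I ce k \<psi> P \<Longrightarrow> k \<le> l \<Longrightarrow> inr N l e \<Longrightarrow> sat N I ce e (\<psi> l) \<longleftrightarrow> P e"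
  unfolding boolg_def by blast
lemma boolg_dep: "boolg N I ce k \<psi> P \<Longrightarrow> dep k P"
  unfolding boolg_def by blast
lemma boolg_mono: "boolg N I ce k \<psi> P \<Longrightarrow> k \<le> k' \<Longrightarrow> boolg N I ce k' \<psi> P"
  unfolding boolg_def using dep_mono by (metis order_trans)

lemma bit_ge_N: "(a::nat) < 2 ^ N \<Longrightarrow> N \<le> j \<Longrightarrow> \<not> bit a j"
  by (metis bit_take_bit_iff leD take_bit_nat_eq_self_iff)

definition addg :: "ngen \<Rightarrow> ngen \<Rightarrow> ngen" where
  "addg \<phi> \<psi> l y = FXor (FXor (\<phi> l y) (\<psi> l y))
     (Exi l (Conj (Lt (V l) (V y)) (Conj (\<phi> (Suc l) l) (Conj (\<psi> (Suc l) l)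
        (FAll (Suc l) (FImp (Conj (Lt (V l) (V (Suc l))) (Lt (V (Suc l)) (V y)))
             (FOr (\<phi> (Suc (Suc l)) (Suc l)) (\<psi> (Suc (Suc l)) (Suc l)))))))))"

lemma addg:
  assumes f: "numg N I ce k \<phi> a" and g: "numg N I ce k \<psi> b" and bd: "\<And>e. a e + b e < 2 ^ N"
  shows "numg N I ce k (addg \<phi> \<psi>) (\<lambda>e. a e + b e)"
  unfolding numg_def
proof (intro conjI allI impI)
  fix l e y assume kl: "k \<le> l" and yl: "y < l" and ie: "inr N l e"
  have yN: "e y < N" using ie yl by (rule inrD)
  have A0: "sat N I ce e (\<phi> l y) \<longleftrightarrow> bit (a e) (e y)" "sat N I ce e (\<psi> l y) \<longleftrightarrow> bit (b e) (e y)"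
    using numgD[OF f kl yl ie] numgD[OF g kl yl ie] by auto
  have A1: "sat N I ce (e(l:=d)) (\<phi> (Suc l) l) \<longleftrightarrow> bit (a e) d"
           "sat N I ce (e(l:=d)) (\<psi> (Suc l) l) \<longleftrightarrow> bit (b e) d" if "d < N" for d
    using numgD[OF f _ _ inr_upd[OF ie that], of l] numgD[OF g _ _ inr_upd[OF ie that], of l] kl
      dep_upd[OF numg_dep[OF f] kl] dep_upd[OF numg_dep[OF g] kl] by auto
  have A2: "sat N I ce (e(l:=d, Suc l:=d')) (\<phi> (Suc (Suc l)) (Suc l)) \<longleftrightarrow> bit (a e) d'"
           "sat N I ce (e(l:=d, Suc l:=d')) (\<psi> (Suc (Suc l)) (Suc l)) \<longleftrightarrow> bit (b e) d'" if "d < N" "d' < N" for d d'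
  proof -
    have ie2: "inr N (Suc (Suc l)) (e(l:=d, Suc l:=d'))" using inr_upd[OF inr_upd[OF ie that(1)] that(2)] .
    have "a (e(l:=d, Suc l:=d')) = a e" "b (e(l:=d, Suc l:=d')) = b e"
      using dep_upd[OF numg_dep[OF f], of "Suc l"] dep_upd[OF numg_dep[OF f], of l]
            dep_upd[OF numg_dep[OF g], of "Suc l"] dep_upd[OF numg_dep[OF g], of l] kl by auto
    then show "sat N I ce (e(l:=d, Suc l:=d')) (\<phi> (Suc (Suc l)) (Suc l)) \<longleftrightarrow> bit (a e) d'"
           "sat N I ce (e(l:=d, Suc l:=d')) (\<psi> (Suc (Suc l)) (Suc l)) \<longleftrightarrow> bit (b e) d'"
      using numgD[OF f _ _ ie2, of "Suc l"] numgD[OF g _ _ ie2, of "Suc l"] kl by auto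
  qed
  have yne: "y \<noteq> l" "y \<noteq> Suc l" using yl by auto
  have C: "sat N I ce e (Exi l (Conj (Lt (V l) (V y)) (Conj (\<phi> (Suc l) l) (Conj (\<psi> (Suc l) l)
        (FAll (Suc l) (FImp (Conj (Lt (V l) (V (Suc l))) (Lt (V (Suc l)) (V y)))
             (FOr (\<phi> (Suc (Suc l)) (Suc l)) (\<psi> (Suc (Suc l)) (Suc l))))))))) \<longleftrightarrow> carry (a e) (b e) (e y)"
    unfolding carry_iff
  proof
    assume "sat N I ce e (Exi l (Conj (Lt (V l) (V y)) (Conj (\<phi> (Suc l) l) (Conj (\<psi> (Suc l) l)
        (FAll (Suc l) (FImp (Conj (Lt (V l) (V (Suc l))) (Lt (V (Suc l)) (V y)))
             (FOr (\<phi> (Suc (Suc l)) (Suc l)) (\<psi> (Suc (Suc l)) (Suc l)))))))))"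
    then obtain d where d: "d < N" "d < e y" "sat N I ce (e(l:=d)) (\<phi> (Suc l) l)" "sat N I ce (e(l:=d)) (\<psi> (Suc l) l)"
      "\<forall>d'<N. d < d' \<and> d' < e y \<longrightarrow> sat N I ce (e(l:=d, Suc l:=d')) (\<phi> (Suc (Suc l)) (Suc l)) \<or> sat N I ce (e(l:=d, Suc l:=d')) (\<psi> (Suc (Suc l)) (Suc l))"
      using yne by auto
    show "\<exists>k<e y. bit (a e) k \<and> bit (b e) k \<and> (\<forall>l. k < l \<and> l < e y \<longrightarrow> bit (a e) l \<or> bit (b e) l)"
      using d A1 A2 yN by (intro exI[of _ d]) auto
  next
    assume "\<exists>k<e y. bit (a e) k \<and> bit (b e) k \<and> (\<forall>l. k < l \<and> l < e y \<longrightarrow> bit (a e) l \<or> bit (b e) l)"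
    then obtain d where d: "d < e y" "bit (a e) d" "bit (b e) d" "\<forall>l. d < l \<and> l < e y \<longrightarrow> bit (a e) l \<or> bit (b e) l"
      by blast
    have dN: "d < N" using d yN by auto
    show "sat N I ce e (Exi l (Conj (Lt (V l) (V y)) (Conj (\<phi> (Suc l) l) (Conj (\<psi> (Suc l) l)
        (FAll (Suc l) (FImp (Conj (Lt (V l) (V (Suc l))) (Lt (V (Suc l)) (V y)))
             (FOr (\<phi> (Suc (Suc l)) (Suc l)) (\<psi> (Suc (Suc l)) (Suc l)))))))))"
      using d dN A1[OF dN] A2[OF dN] yne by auto
  qed
  show "sat N I ce e (addg \<phi> \<psi> l y) \<longleftrightarrow> bit (a e + b e) (e y)"
    unfolding addg_def bit_add_carry using A0 C by simp
next
  show "dep k (\<lambda>e. a e + b e)" using numg_dep[OF f] numg_dep[OF g] unfolding dep_def by metis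
next
  fix e show "a e + b e < 2 ^ N" by (rule bd)
qed

definition ltg :: "ngen \<Rightarrow> ngen \<Rightarrow> bgen" where
  "ltg \<phi> \<psi> l = Exi l (Conj (Neg (\<phi> (Suc l) l)) (Conj (\<psi> (Suc l) l)
      (FAll (Suc l) (FImp (Lt (V l) (V (Suc l))) (FIff (\<phi> (Suc (Suc l)) (Suc l)) (\<psi> (Suc (Suc l)) (Suc l)))))))"

lemma ltg:
  assumes f: "numg N I ce k \<phi> a" and g: "numg N I ce k \<psi> b"
  shows "boolg N I ce k (ltg \<phi> \<psi>) (\<lambda>e. a e < b e)"
  unfolding boolg_def
proof (intro conjI allI impI)
  fix l e assume kl: "k \<le> l" and ie: "inr N l e"
  have A1: "sat N I ce (e(l:=d)) (\<phi> (Suc l) l) \<longleftrightarrow> bit (a e) d"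
           "sat N I ce (e(l:=d)) (\<psi> (Suc l) l) \<longleftrightarrow> bit (b e) d" if "d < N" for d
    using numgD[OF f _ _ inr_upd[OF ie that], of l] numgD[OF g _ _ inr_upd[OF ie that], of l] kl
      dep_upd[OF numg_dep[OF f] kl] dep_upd[OF numg_dep[OF g] kl] by auto
  have A2: "sat N I ce (e(l:=d, Suc l:=d')) (\<phi> (Suc (Suc l)) (Suc l)) \<longleftrightarrow> bit (a e) d'"
           "sat N I ce (e(l:=d, Suc l:=d')) (\<psi> (Suc (Suc l)) (Suc l)) \<longleftrightarrow> bit (b e) d'" if "d < N" "d' < N" for d d'
  proof -
    have ie2: "inr N (Suc (Suc l)) (e(l:=d, Suc l:=d'))" using inr_upd[OF inr_upd[OF ie that(1)] that(2)] .
    have "a (e(l:=d, Suc l:=d')) = a e" "b (e(l:=d, Suc l:=d')) = b e"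
      using dep_upd[OF numg_dep[OF f], of "Suc l"] dep_upd[OF numg_dep[OF f], of l]
            dep_upd[OF numg_dep[OF g], of "Suc l"] dep_upd[OF numg_dep[OF g], of l] kl by auto
    then show "sat N I ce (e(l:=d, Suc l:=d')) (\<phi> (Suc (Suc l)) (Suc l)) \<longleftrightarrow> bit (a e) d'"
           "sat N I ce (e(l:=d, Suc l:=d')) (\<psi> (Suc (Suc l)) (Suc l)) \<longleftrightarrow> bit (b e) d'"
      using numgD[OF f _ _ ie2, of "Suc l"] numgD[OF g _ _ ie2, of "Suc l"] kl by auto
  qed
  have lt: "a e < b e \<longleftrightarrow> (\<exists>j<N. \<not> bit (a e) j \<and> bit (b e) j \<and> (\<forall>l. j < l \<and> l < N \<longrightarrow> (bit (a e) l \<longleftrightarrow> bit (b e) l)))"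
    by (rule bitlt) (auto intro: numg_bound[OF f] numg_bound[OF g])
  show "sat N I ce e (ltg \<phi> \<psi> l) \<longleftrightarrow> a e < b e"
    unfolding lt ltg_def
  proof
    assume "sat N I ce e (Exi l (Conj (Neg (\<phi> (Suc l) l)) (Conj (\<psi> (Suc l) l)
      (FAll (Suc l) (FImp (Lt (V l) (V (Suc l))) (FIff (\<phi> (Suc (Suc l)) (Suc l)) (\<psi> (Suc (Suc l)) (Suc l))))))))"
    then obtain d where d: "d < N" "\<not> sat N I ce (e(l:=d)) (\<phi> (Suc l) l)" "sat N I ce (e(l:=d)) (\<psi> (Suc l) l)"
      "\<forall>d'<N. d < d' \<longrightarrow> (sat N I ce (e(l:=d, Suc l:=d')) (\<phi> (Suc (Suc l)) (Suc l)) \<longleftrightarrow> sat N I ce (e(l:=d, Suc l:=d')) (\<psi> (Suc (Suc l)) (Suc l)))"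
      by auto
    show "\<exists>j<N. \<not> bit (a e) j \<and> bit (b e) j \<and> (\<forall>l. j < l \<and> l < N \<longrightarrow> (bit (a e) l \<longleftrightarrow> bit (b e) l))"
      using d A1[OF d(1)] A2[OF d(1)] by (intro exI[of _ d]) auto
  next
    assume "\<exists>j<N. \<not> bit (a e) j \<and> bit (b e) j \<and> (\<forall>l. j < l \<and> l < N \<longrightarrow> (bit (a e) l \<longleftrightarrow> bit (b e) l))"
    then obtain d where d: "d < N" "\<not> bit (a e) d" "bit (b e) d" "\<forall>l. d < l \<and> l < N \<longrightarrow> (bit (a e) l \<longleftrightarrow> bit (b e) l)"
      by blast
    show "sat N I ce e (Exi l (Conj (Neg (\<phi> (Suc l) l)) (Conj (\<psi> (Suc l) l)
      (FAll (Suc l) (FImp (Lt (V l) (V (Suc l))) (FIff (\<phi> (Suc (Suc l)) (Suc l)) (\<psi> (Suc (Suc l)) (Suc l))))))))"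
      using d A1[OF d(1)] A2[OF d(1)] by auto
  qed
next
  show "dep k (\<lambda>e. a e < b e)" using numg_dep[OF f] numg_dep[OF g] unfolding dep_def by metis
qed

definition advI :: "nat \<Rightarrow> nat \<Rightarrow> nat list set" where
  "advI nz kk = {[j + nz, 2 ^ j + nz] | j. j \<le> kk}"

definition isnf :: "nat \<Rightarrow> bgen" where
  "isnf x l = Conj (Exi l (Atom (SAdv 0) [V x, V l]))
     (Neg (Exi l (Exi (Suc l) (Conj (Atom (SAdv 0) [V l, V (Suc l)]) (Lt (V l) (V x))))))"

lemma isnf:
  assumes adv: "I (SAdv 0) = advI nz kk" and NN: "N = nz + 2 ^ Suc kk" and xk: "x < k"
  shows "boolg N I ce k (isnf x) (\<lambda>e. e x = nz)"
  unfolding boolg_def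
proof (intro conjI allI impI)
  fix l e assume kl: "k \<le> l" and ie: "inr N l e"
  have xl: "x \<noteq> l" "x \<noteq> Suc l" using xk kl by auto
  have p: "(2::nat) \<le> 2 ^ Suc kk" by (metis one_le_numeral one_le_power power_Suc mult_le_mono2 mult.right_neutral)
  show "sat N I ce e (isnf x l) \<longleftrightarrow> e x = nz"
  proof
    assume "sat N I ce e (isnf x l)"
    then obtain w j where j: "e x = j + nz" "w = 2 ^ j + nz" "j \<le> kk"
      and no: "\<not> (\<exists>d<N. \<exists>d'<N. [d, d'] \<in> advI nz kk \<and> d < e x)"
      using xl unfolding isnf_def by (auto simp: adv advI_def)
    have m: "[nz, nz + 1] \<in> advI nz kk" unfolding advI_def by (rule CollectI, rule exI[of _ 0]) auto
    moreover have n1: "nz + 1 < N" unfolding NN using p by linarith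
    ultimately have "\<not> nz < e x" using no by auto
    then show "e x = nz" using j by auto
  next
    assume ex: "e x = nz"
    have "nz + 1 < N" unfolding NN using p by linarith
    moreover have "[nz, 1 + nz] \<in> advI nz kk" unfolding advI_def by (rule CollectI, rule exI[of _ 0]) auto
    ultimately show "sat N I ce e (isnf x l)"
      using xl ex unfolding isnf_def by (auto simp: adv advI_def)
  qed
next
  show "dep k (\<lambda>e. e x = nz)" unfolding dep_def using xk by auto
qed

definition capg :: "ngen \<Rightarrow> ngen" where
  "capg \<phi> l y = Exi l (Conj (isnf l (Suc l))
     (FOr (Conj (Exi (Suc l) (Conj (Neg (Lt (V (Suc l)) (V l))) (\<phi> (Suc (Suc l)) (Suc l)))) (Eq (V y) (V l)))
          (Conj (Neg (Exi (Suc l) (Conj (Neg (Lt (V (Suc l)) (V l))) (\<phi> (Suc (Suc l)) (Suc l))))) (\<phi> (Suc l) y))))"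

lemma capg:
  assumes adv: "I (SAdv 0) = advI nz kk" and NN: "N = nz + 2 ^ Suc kk" and f: "numg N I ce k \<phi> a"
  shows "numg N I ce k (capg \<phi>) (\<lambda>e. min (a e) (2 ^ nz))"
  unfolding numg_def
proof (intro conjI allI impI)
  fix l e y assume kl: "k \<le> l" and yl: "y < l" and ie: "inr N l e"
  have n0N: "nz < N" using NN by simp
  have ie1: "inr N (Suc l) (e(l := nz))" by (rule inr_upd[OF ie n0N])
  have isn: "sat N I ce (e(l:=d)) (isnf l (Suc l)) \<longleftrightarrow> d = nz" if "d < N" for d
    using boolgD[OF isnf[where I=I and N=N and nz=nz and kk=kk and x=l and k="Suc l", OF adv NN lessI] order_refl inr_upd[OF ie that]] by simp
  have A0: "sat N I ce (e(l:=nz)) (\<phi> (Suc l) y) \<longleftrightarrow> bit (a e) (e y)"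
    using numgD[OF f _ _ ie1, of y] kl yl dep_upd[OF numg_dep[OF f] kl] by auto
  have A2: "sat N I ce (e(l:=nz, Suc l:=d')) (\<phi> (Suc (Suc l)) (Suc l)) \<longleftrightarrow> bit (a e) d'" if "d' < N" for d'
  proof -
    have ie2: "inr N (Suc (Suc l)) (e(l:=nz, Suc l:=d'))" using inr_upd[OF ie1 that] .
    have "a (e(l:=nz, Suc l:=d')) = a e"
      using dep_upd[OF numg_dep[OF f], of "Suc l"] dep_upd[OF numg_dep[OF f], of l] kl by auto
    then show ?thesis using numgD[OF f _ _ ie2, of "Suc l"] kl by auto
  qed
  have G: "sat N I ce (e(l:=nz)) (Exi (Suc l) (Conj (Neg (Lt (V (Suc l)) (V l))) (\<phi> (Suc (Suc l)) (Suc l))))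
       \<longleftrightarrow> 2 ^ nz \<le> a e"
  proof -
    have "2 ^ nz \<le> a e \<longleftrightarrow> (\<exists>j\<ge>nz. bit (a e) j)" by (rule ge_pow_iff)
    also have "\<dots> \<longleftrightarrow> (\<exists>j<N. nz \<le> j \<and> bit (a e) j)"
      using bit_ge_N[OF numg_bound[OF f, of e]] by (meson not_le)
    finally show ?thesis using A2 by auto
  qed
  have yne: "y \<noteq> l" using yl by auto
  show "sat N I ce e (capg \<phi> l y) \<longleftrightarrow> bit (min (a e) (2 ^ nz)) (e y)"
    unfolding capg_def bit_cap
    apply (simp only: sat.simps)
    using isn G A0 yne n0N by auto
next
  show "dep k (\<lambda>e. min (a e) (2 ^ nz))" using numg_dep[OF f] unfolding dep_def by metis
next
  fix e show "min (a e) (2 ^ nz) < 2 ^ N" using numg_bound[OF f, of e] by simp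
qed

definition iteg :: "bgen \<Rightarrow> ngen \<Rightarrow> ngen \<Rightarrow> ngen" where
  "iteg B \<phi> \<psi> l y = FOr (Conj (B l) (\<phi> l y)) (Conj (Neg (B l)) (\<psi> l y))"

lemma iteg:
  assumes B: "boolg N I ce k B P" and f: "numg N I ce k \<phi> a" and g: "numg N I ce k \<psi> b"
  shows "numg N I ce k (iteg B \<phi> \<psi>) (\<lambda>e. if P e then a e else b e)"
  unfolding numg_def
proof (intro conjI allI impI)
  fix l e y assume kl: "k \<le> l" and yl: "y < l" and ie: "inr N l e"
  show "sat N I ce e (iteg B \<phi> \<psi> l y) \<longleftrightarrow> bit (if P e then a e else b e) (e y)"
    unfolding iteg_def using boolgD[OF B kl ie] numgD[OF f kl yl ie] numgD[OF g kl yl ie] by auto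
next
  show "dep k (\<lambda>e. if P e then a e else b e)" using numg_dep[OF f] numg_dep[OF g] boolg_dep[OF B]
    unfolding dep_def by metis
next
  fix e show "(if P e then a e else b e) < 2 ^ N" using numg_bound[OF f, of e] numg_bound[OF g, of e] by simp
qed

definition zerog :: ngen where "zerog l y = Neg (Eq (V y) (V y))"

lemma zerog: "numg N I ce k zerog (\<lambda>e. 0)"
  unfolding numg_def zerog_def dep_def by auto

fun tok :: "nat \<Rightarrow> tm \<Rightarrow> bool" where
  "tok k (V z) \<longleftrightarrow> z < k"
| "tok k (C i) \<longleftrightarrow> True"

definition auxg :: "sym \<Rightarrow> tm list \<Rightarrow> ngen" where
  "auxg R ts l y = Atom R (ts @ [V y])"

lemma tval_lt: "tok k t \<Longrightarrow> k \<le> l \<Longrightarrow> inr N l e \<Longrightarrow> (\<forall>x\<in>set ce. x < N) \<Longrightarrow> 0 < N \<Longrightarrow> tval ce e t < N"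
  by (cases t) (auto simp: inr_def)

lemma tval_dep: "tok k t \<Longrightarrow> (\<forall>z<k. e z = e' z) \<Longrightarrow> tval ce e t = tval ce e' t"
  by (cases t) auto

lemma auxg:
  assumes IR: "\<And>vs j. (vs @ [j]) \<in> I R \<longleftrightarrow> (length vs = length ts \<and> (\<forall>v\<in>set vs. v < N) \<and> j < N \<and> bit (f vs) j)"
    and fb: "\<And>vs. f vs < 2 ^ N" and ts: "\<forall>t\<in>set ts. tok k t" and ceN: "\<forall>x\<in>set ce. x < N" and N0: "0 < N"
  shows "numg N I ce k (auxg R ts) (\<lambda>e. f (map (tval ce e) ts))"
  unfolding numg_def
proof (intro conjI allI impI)
  fix l e y assume kl: "k \<le> l" and yl: "y < l" and ie: "inr N l e"
  have "\<forall>v\<in>set (map (tval ce e) ts). v < N" using tval_lt[OF _ kl ie ceN N0] ts by auto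
  moreover have "e y < N" using ie yl by (rule inrD)
  ultimately show "sat N I ce e (auxg R ts l y) \<longleftrightarrow> bit (f (map (tval ce e) ts)) (e y)"
    unfolding auxg_def using IR by simp
next
  show "dep k (\<lambda>e. f (map (tval ce e) ts))"
    unfolding dep_def
  proof (intro allI impI)
    fix e e' :: "nat \<Rightarrow> nat" assume "\<forall>z<k. e z = e' z"
    then have "map (tval ce e) ts = map (tval ce e') ts"
      using ts by (intro map_cong refl) (auto intro: tval_dep)
    then show "f (map (tval ce e) ts) = f (map (tval ce e') ts)" by (rule arg_cong)
  qed
next
  fix e show "f (map (tval ce e) ts) < 2 ^ N" by (rule fb)
qed

lemma bitcore:
  assumes NN: "N = nz + 2 ^ Suc kk" and XN: "X < N"
  shows "(\<exists>xx<N. \<exists>yy<N. \<exists>P<N. \<exists>q<N. \<exists>r<N. \<exists>u<N. xx = j + nz \<and> [xx, yy] \<in> advI nz kk \<and> P + nz = yy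
            \<and> q * P = u \<and> u + r = X \<and> r < P \<and> \<not> (\<exists>h<N. h + h = q))
         \<longleftrightarrow> (j \<le> kk \<and> bit X j)"
proof
  assume "\<exists>xx<N. \<exists>yy<N. \<exists>P<N. \<exists>q<N. \<exists>r<N. \<exists>u<N. xx = j + nz \<and> [xx, yy] \<in> advI nz kk \<and> P + nz = yy
            \<and> q * P = u \<and> u + r = X \<and> r < P \<and> \<not> (\<exists>h<N. h + h = q)"
  then obtain xx yy P q r u where h: "xx = j + nz" "[xx, yy] \<in> advI nz kk" "P + nz = yy"
     "q * P = u" "u + r = X" "r < P" "\<not> (\<exists>h<N. h + h = q)" "q < N" by blast
  from h(2) obtain j' where j': "xx = j' + nz" "yy = 2 ^ j' + nz" "j' \<le> kk" unfolding advI_def by auto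
  have jj: "j = j'" using h(1) j'(1) by simp
  have P: "P = 2 ^ j" using h(3) j'(2) jj by simp
  have Xe: "X = r + q * 2 ^ j" using h(4,5) P by simp
  have q: "q = X div 2 ^ j" unfolding Xe using h(6) P by simp
  have "odd q"
  proof
    assume "even q" then obtain h where "q = h + h" by (metis evenE mult_2)
    then have "h < N" using h(8) by linarith
    then show False using h(7) \<open>q = h + h\<close> by blast
  qed
  then show "j \<le> kk \<and> bit X j" using jj j'(3) q by (simp add: bit_iff_odd)
next
  assume jb: "j \<le> kk \<and> bit X j"
  have p1: "(2::nat) ^ j \<le> 2 ^ kk" using jb by (simp add: power_increasing)
  have p2: "(2::nat) ^ kk < 2 ^ Suc kk" by simp
  have p3: "j < 2 ^ Suc kk" using jb less_exp[of "Suc kk"] by linarith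
  define q where "q = X div 2 ^ j"
  define r where "r = X mod 2 ^ j"
  have oq: "odd q" using jb unfolding q_def by (simp add: bit_iff_odd)
  have qX: "q \<le> X" unfolding q_def by (simp add: div_le_dividend)
  have ux: "q * 2 ^ j \<le> X" unfolding q_def by (metis div_mult_mod_eq le_add1)
  have rP: "r < 2 ^ j" unfolding r_def by simp
  have e1: "q * 2 ^ j + r = X" unfolding q_def r_def by (rule div_mult_mod_eq)
  have e2: "\<not> (\<exists>h<N. h + h = q)" using oq by auto
  have e3: "[j + nz, 2 ^ j + nz] \<in> advI nz kk" unfolding advI_def using jb by blast
  have b1: "j + nz < N" "2 ^ j + nz < N" "(2::nat) ^ j < N" using NN p1 p2 p3 by linarith+
  have b2: "q < N" "r < N" "q * 2 ^ j < N" using qX ux XN rP NN p1 p2 by linarith+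
  show "\<exists>xx<N. \<exists>yy<N. \<exists>P<N. \<exists>q<N. \<exists>r<N. \<exists>u<N. xx = j + nz \<and> [xx, yy] \<in> advI nz kk \<and> P + nz = yy
            \<and> q * P = u \<and> u + r = X \<and> r < P \<and> \<not> (\<exists>h<N. h + h = q)"
    apply (rule exI[of _ "j + nz"], rule conjI[OF b1(1)])
    apply (rule exI[of _ "2 ^ j + nz"], rule conjI[OF b1(2)])
    apply (rule exI[of _ "2 ^ j"], rule conjI[OF b1(3)])
    apply (rule exI[of _ q], rule conjI[OF b2(1)])
    apply (rule exI[of _ r], rule conjI[OF b2(2)])
    apply (rule exI[of _ "q * 2 ^ j"], rule conjI[OF b2(3)])
    using e1 e2 e3 rP by simp
qed

definition bitg :: "nat \<Rightarrow> ngen" where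
  "bitg x l y = Exi l (Conj (isnf l (Suc l))
     (Exi (l+1) (Exi (l+2) (Exi (l+3) (Exi (l+4) (Exi (l+5) (Exi (l+6)
       (Conj (Plus (V y) (V l) (V (l+1))) (Conj (Atom (SAdv 0) [V (l+1), V (l+2)])
       (Conj (Plus (V (l+3)) (V l) (V (l+2))) (Conj (Times (V (l+4)) (V (l+3)) (V (l+6)))
       (Conj (Plus (V (l+6)) (V (l+5)) (V x)) (Conj (Lt (V (l+5)) (V (l+3)))
       (Neg (Exi (l+7) (Plus (V (l+7)) (V (l+7)) (V (l+4))))))))))))))))))"

lemma ex_unique_lemma: "(\<And>d. d < N \<Longrightarrow> P d \<longleftrightarrow> d = nz) \<Longrightarrow> nz < N \<Longrightarrow> (\<exists>d<N. P d \<and> Q d) \<longleftrightarrow> Q nz"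
  by auto
lemma bitg_sat:
  assumes adv: "I (SAdv 0) = advI nz kk" and NN: "N = nz + 2 ^ Suc kk" and xl: "x < l" and yl: "y < l"
   and isn: "\<And>d. d < N \<Longrightarrow> sat N I ce (e(l:=d)) (isnf l (Suc l)) \<longleftrightarrow> d = nz" and nzN: "nz < N"
  shows "sat N I ce e (bitg x l y) \<longleftrightarrow>
     (\<exists>xx<N. \<exists>yy<N. \<exists>P<N. \<exists>q<N. \<exists>r<N. \<exists>u<N. xx = e y + nz \<and> [xx, yy] \<in> advI nz kk \<and> P + nz = yy
            \<and> q * P = u \<and> u + r = e x \<and> r < P \<and> \<not> (\<exists>h<N. h + h = q))"
proof -
  have ne: "x \<noteq> l + 0" "x \<noteq> l + 1" "x \<noteq> l + 2" "x \<noteq> l + 3" "x \<noteq> l + 4" "x \<noteq> l + 5" "x \<noteq> l + 6" "x \<noteq> l + 7" "y \<noteq> l + 0" "y \<noteq> l + 1" "y \<noteq> l + 2" "y \<noteq> l + 3" "y \<noteq> l + 4" "y \<noteq> l + 5" "y \<noteq> l + 6" "y \<noteq> l + 7" using xl yl by auto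
  have "sat N I ce e (bitg x l y) \<longleftrightarrow> (\<exists>d<N. sat N I ce (e(l:=d)) (isnf l (Suc l)) \<and> 
     sat N I ce (e(l:=d)) (Exi (l+1) (Exi (l+2) (Exi (l+3) (Exi (l+4) (Exi (l+5) (Exi (l+6)
       (Conj (Plus (V y) (V l) (V (l+1))) (Conj (Atom (SAdv 0) [V (l+1), V (l+2)])
       (Conj (Plus (V (l+3)) (V l) (V (l+2))) (Conj (Times (V (l+4)) (V (l+3)) (V (l+6)))
       (Conj (Plus (V (l+6)) (V (l+5)) (V x)) (Conj (Lt (V (l+5)) (V (l+3)))
       (Neg (Exi (l+7) (Plus (V (l+7)) (V (l+7)) (V (l+4))))))))))))))))))"
    unfolding bitg_def by (simp only: sat.simps)
  also have "\<dots> \<longleftrightarrow> sat N I ce (e(l:=nz)) (Exi (l+1) (Exi (l+2) (Exi (l+3) (Exi (l+4) (Exi (l+5) (Exi (l+6)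
       (Conj (Plus (V y) (V l) (V (l+1))) (Conj (Atom (SAdv 0) [V (l+1), V (l+2)])
       (Conj (Plus (V (l+3)) (V l) (V (l+2))) (Conj (Times (V (l+4)) (V (l+3)) (V (l+6)))
       (Conj (Plus (V (l+6)) (V (l+5)) (V x)) (Conj (Lt (V (l+5)) (V (l+3)))
       (Neg (Exi (l+7) (Plus (V (l+7)) (V (l+7)) (V (l+4)))))))))))))))))"
    by (rule ex_unique_lemma[OF isn nzN])
  also have "\<dots> \<longleftrightarrow> (\<exists>xx<N. \<exists>yy<N. \<exists>P<N. \<exists>q<N. \<exists>r<N. \<exists>u<N. e y + nz = xx \<and> [xx, yy] \<in> advI nz kk \<and> P + nz = yy
            \<and> q * P = u \<and> u + r = e x \<and> r < P \<and> \<not> (\<exists>h<N. h + h = q))"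
    using ne by (simp add: adv)
  finally show ?thesis by (simp only: eq_commute[of "e y + nz"])
qed

lemma bitg:
  assumes adv: "I (SAdv 0) = advI nz kk" and NN: "N = nz + 2 ^ Suc kk" and xk: "x < k"
  shows "numg N I ce k (bitg x) (\<lambda>e. e x mod 2 ^ Suc kk)"
  unfolding numg_def
proof (intro conjI allI impI)
  fix l e y assume kl: "k \<le> l" and yl: "y < l" and ie: "inr N l e"
  have nzN: "nz < N" using NN by simp
  have isn: "sat N I ce (e(l:=d)) (isnf l (Suc l)) \<longleftrightarrow> d = nz" if "d < N" for d
    using boolgD[OF isnf[where I=I and N=N and nz=nz and kk=kk and x=l and k="Suc l", OF adv NN lessI] order_refl inr_upd[OF ie that]] by simp
  have xl: "x < l" using xk kl by simp
  have XN: "e x < N" "e y < N" using ie xl yl by (auto intro: inrD)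
  have "sat N I ce e (bitg x l y) \<longleftrightarrow>
     (\<exists>xx<N. \<exists>yy<N. \<exists>P<N. \<exists>q<N. \<exists>r<N. \<exists>u<N. xx = e y + nz \<and> [xx, yy] \<in> advI nz kk \<and> P + nz = yy
            \<and> q * P = u \<and> u + r = e x \<and> r < P \<and> \<not> (\<exists>h<N. h + h = q))"
    by (rule bitg_sat[OF adv NN xl yl isn nzN])
  also have "\<dots> \<longleftrightarrow> e y \<le> kk \<and> bit (e x) (e y)" by (rule bitcore[OF NN XN(1)])
  also have "\<dots> \<longleftrightarrow> bit (take_bit (Suc kk) (e x)) (e y)"
    by (auto simp: bit_take_bit_iff less_Suc_eq_le)
  also have "\<dots> \<longleftrightarrow> bit (e x mod 2 ^ Suc kk) (e y)" by (simp only: take_bit_eq_mod)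
  finally show "sat N I ce e (bitg x l y) \<longleftrightarrow> bit (e x mod 2 ^ Suc kk) (e y)" .
next
  show "dep k (\<lambda>e. e x mod 2 ^ Suc kk)" unfolding dep_def using xk by auto
next
  fix e
  have "e x mod 2 ^ Suc kk < (2::nat) ^ Suc kk" by simp
  also have "\<dots> \<le> N" using NN by simp
  also have "N < 2 ^ N" by (rule less_exp)
  finally show "e x mod 2 ^ Suc kk < 2 ^ N" .
qed


definition splitf :: "nat \<Rightarrow> nat \<Rightarrow> nat \<Rightarrow> fo" where
  "splitf x bv w = Exi w (Conj (Plus (V x) (V (Suc x)) (V w)) (Plus (V w) (V (Suc (Suc x))) (V bv)))"

lemma splitf_sat:
  assumes "bv \<noteq> w" "x \<noteq> w" "Suc x \<noteq> w" "Suc (Suc x) \<noteq> w" "e bv < N"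
  shows "sat N I ce e (splitf x bv w) \<longleftrightarrow> e x + e (Suc x) + e (Suc (Suc x)) = e bv"
proof
  assume "sat N I ce e (splitf x bv w)"
  then show "e x + e (Suc x) + e (Suc (Suc x)) = e bv" using assms unfolding splitf_def by auto
next
  assume h: "e x + e (Suc x) + e (Suc (Suc x)) = e bv"
  then have "e x + e (Suc x) < N" using assms(5) by linarith
  then show "sat N I ce e (splitf x bv w)" using assms h unfolding splitf_def by auto
qed

definition msg :: "nat \<Rightarrow> (nat \<Rightarrow> ngen) \<Rightarrow> ngen" where
  "msg bv F l y = Exi l (Exi (l+1) (Exi (l+2) (Conj (splitf l bv (l+3))
      (Conj (FAll (l+3) (FAll (l+4) (FAll (l+5) (FImp (splitf (l+3) bv (l+6)) (Neg (ltg (F l) (F (l+3)) (l+6)))))))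
            (F l (l+3) y)))))"

lemma bex3_cong: "(\<And>a b c. a < N \<Longrightarrow> b < N \<Longrightarrow> c < N \<Longrightarrow> P a b c = Q a b c) \<Longrightarrow>
   (\<exists>a<N. \<exists>b<N. \<exists>c<N. P a b c) = (\<exists>a<N. \<exists>b<N. \<exists>c<N. Q a b c)"
  by blast

lemma bex3I: "a < N \<Longrightarrow> b < N \<Longrightarrow> c < N \<Longrightarrow> P a b c \<Longrightarrow> \<exists>a<N. \<exists>b<N. \<exists>c<N. P a b c"
  by blast

lemma Max_bit_lemma:
  fixes G :: "nat \<Rightarrow> nat \<Rightarrow> nat \<Rightarrow> nat"
  assumes BN: "B < N"
  shows "(\<exists>d1<N. \<exists>d2<N. \<exists>d3<N. d1 + d2 + d3 = B \<and>
            (\<forall>c1<N. \<forall>c2<N. \<forall>c3<N. c1 + c2 + c3 = B \<longrightarrow> \<not> G d1 d2 d3 < G c1 c2 c3) \<and> bit (G d1 d2 d3) j)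
      \<longleftrightarrow> bit (Max {G b1 b2 b3 | b1 b2 b3. b1 + b2 + b3 = B}) j"
proof -
  let ?S = "{G b1 b2 b3 | b1 b2 b3. b1 + b2 + b3 = B}"
  have "?S \<subseteq> (\<lambda>(b1, b2, b3). G b1 b2 b3) ` ({..B} \<times> {..B} \<times> {..B})"
  proof
    fix v assume "v \<in> ?S"
    then obtain b1 b2 b3 where v: "v = G b1 b2 b3" "b1 + b2 + b3 = B" by blast
    then show "v \<in> (\<lambda>(b1, b2, b3). G b1 b2 b3) ` ({..B} \<times> {..B} \<times> {..B})"
      by (intro image_eqI[of _ _ "(b1, b2, b3)"]) auto
  qed
  then have fin: "finite ?S" by (rule finite_subset) auto
  have "G B 0 0 \<in> ?S" by (rule CollectI, rule exI[of _ B], rule exI[of _ 0], rule exI[of _ 0]) simp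
  then have ne: "?S \<noteq> {}" by blast
  show ?thesis
  proof
    assume "\<exists>d1<N. \<exists>d2<N. \<exists>d3<N. d1 + d2 + d3 = B \<and>
            (\<forall>c1<N. \<forall>c2<N. \<forall>c3<N. c1 + c2 + c3 = B \<longrightarrow> \<not> G d1 d2 d3 < G c1 c2 c3) \<and> bit (G d1 d2 d3) j"
    then obtain d1 d2 d3 where d: "d1 + d2 + d3 = B" "\<forall>c1<N. \<forall>c2<N. \<forall>c3<N. c1 + c2 + c3 = B \<longrightarrow> \<not> G d1 d2 d3 < G c1 c2 c3"
      "bit (G d1 d2 d3) j" by blast
    have "Max ?S = G d1 d2 d3"
    proof (rule Max_eqI[OF fin])
      fix v assume "v \<in> ?S"
      then obtain c1 c2 c3 where c: "v = G c1 c2 c3" "c1 + c2 + c3 = B" by blast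
      then have cN: "c1 < N" "c2 < N" "c3 < N" using BN by linarith+
      have "\<not> G d1 d2 d3 < G c1 c2 c3" using d(2) cN c(2) by blast
      then show "v \<le> G d1 d2 d3" using c(1) by simp
    next
      show "G d1 d2 d3 \<in> ?S" using d(1) by blast
    qed
    then show "bit (Max ?S) j" using d(3) by simp
  next
    assume b: "bit (Max ?S) j"
    have "Max ?S \<in> ?S" by (rule Max_in[OF fin ne])
    then obtain d1 d2 d3 where d: "Max ?S = G d1 d2 d3" "d1 + d2 + d3 = B" by blast
    have dN: "d1 < N" "d2 < N" "d3 < N" using d(2) BN by linarith+
    have "\<forall>c1<N. \<forall>c2<N. \<forall>c3<N. c1 + c2 + c3 = B \<longrightarrow> \<not> G d1 d2 d3 < G c1 c2 c3"
    proof (intro allI impI)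
      fix c1 c2 c3 assume "c1 + c2 + c3 = B"
      then have "G c1 c2 c3 \<in> ?S" by blast
      then have "G c1 c2 c3 \<le> Max ?S" by (rule Max_ge[OF fin])
      then show "\<not> G d1 d2 d3 < G c1 c2 c3" using d(1) by simp
    qed
    then show "\<exists>d1<N. \<exists>d2<N. \<exists>d3<N. d1 + d2 + d3 = B \<and>
            (\<forall>c1<N. \<forall>c2<N. \<forall>c3<N. c1 + c2 + c3 = B \<longrightarrow> \<not> G d1 d2 d3 < G c1 c2 c3) \<and> bit (G d1 d2 d3) j"
      using d b by (intro bex3I[OF dN]) simp
  qed
qed

lemma msg:
  assumes bvk: "bv < k"
    and F: "\<And>x. k \<le> x \<Longrightarrow> numg N I ce (x+3) (F x) (\<lambda>e. G (e x) (e (Suc x)) (e (Suc (Suc x))) e)"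
    and Gdep: "\<And>b1 b2 b3. dep k (G b1 b2 b3)"
    and Gbd: "\<And>b1 b2 b3 e. G b1 b2 b3 e < 2 ^ N"
  shows "numg N I ce k (msg bv F) (\<lambda>e. Max {G b1 b2 b3 e | b1 b2 b3. b1 + b2 + b3 = e bv})"
  unfolding numg_def
proof (intro conjI allI impI)
  fix l e y assume kl: "k \<le> l" and yl: "y < l" and ie: "inr N l e"
  have bvl: "bv < l" using bvk kl by simp
  have BN: "e bv < N" using ie bvl by (rule inrD)
  define e1 where "e1 d1 d2 d3 = e(l:=d1, l+1:=d2, l+2:=d3)" for d1 d2 d3
  define e2 where "e2 d1 d2 d3 c1 c2 c3 = (e1 d1 d2 d3)(l+3:=c1, l+4:=c2, l+5:=c3)" for d1 d2 d3 c1 c2 c3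
  have ie1: "inr N (l+3) (e1 d1 d2 d3)" if "d1 < N" "d2 < N" "d3 < N" for d1 d2 d3
    using ie that unfolding e1_def inr_def by (auto simp: less_Suc_eq)
  have ie2: "inr N (l+6) (e2 d1 d2 d3 c1 c2 c3)" if "d1 < N" "d2 < N" "d3 < N" "c1 < N" "c2 < N" "c3 < N" for d1 d2 d3 c1 c2 c3
    using ie that unfolding e2_def e1_def inr_def by (auto simp: less_Suc_eq)
  have agr1: "\<forall>z<k. e1 d1 d2 d3 z = e z" for d1 d2 d3 using kl unfolding e1_def by auto
  have agr2: "\<forall>z<k. e2 d1 d2 d3 c1 c2 c3 z = e z" for d1 d2 d3 c1 c2 c3 using kl unfolding e2_def e1_def by auto
  have Ge1: "G b1 b2 b3 (e1 d1 d2 d3) = G b1 b2 b3 e" for b1 b2 b3 d1 d2 d3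
    using Gdep agr1 unfolding dep_def by blast
  have Ge2: "G b1 b2 b3 (e2 d1 d2 d3 c1 c2 c3) = G b1 b2 b3 e" for b1 b2 b3 d1 d2 d3 c1 c2 c3
    using Gdep agr2 unfolding dep_def by blast
  have S1: "sat N I ce (e1 d1 d2 d3) (splitf l bv (l+3)) \<longleftrightarrow> d1 + d2 + d3 = e bv" for d1 d2 d3
    using splitf_sat[where e="e1 d1 d2 d3" and x=l and bv=bv and w="l+3" and N=N] bvl BN unfolding e1_def by auto
  have S2: "sat N I ce (e2 d1 d2 d3 c1 c2 c3) (splitf (l+3) bv (l+6)) \<longleftrightarrow> c1 + c2 + c3 = e bv" for d1 d2 d3 c1 c2 c3
    using splitf_sat[where e="e2 d1 d2 d3 c1 c2 c3" and x="l+3" and bv=bv and w="l+6" and N=N] bvl BN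
    unfolding e2_def e1_def by (auto simp: numeral_eq_Suc)
  have Fl: "numg N I ce (l+6) (F l) (\<lambda>e. G (e l) (e (Suc l)) (e (Suc (Suc l))) e)"
    using numg_mono[OF F[OF kl]] by simp
  have Fl3: "numg N I ce (l+6) (F (l+3)) (\<lambda>e. G (e (l+3)) (e (Suc (l+3))) (e (Suc (Suc (l+3)))) e)"
    using F[of "l+3"] kl by (simp add: numeral_eq_Suc)
  have L: "sat N I ce (e2 d1 d2 d3 c1 c2 c3) (ltg (F l) (F (l+3)) (l+6)) \<longleftrightarrow> G d1 d2 d3 e < G c1 c2 c3 e"
    if "d1 < N" "d2 < N" "d3 < N" "c1 < N" "c2 < N" "c3 < N" for d1 d2 d3 c1 c2 c3
    using boolgD[OF ltg[OF Fl Fl3] order_refl ie2[OF that]] Ge2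
    unfolding e2_def e1_def by (simp add: numeral_eq_Suc)
  have Fy: "sat N I ce (e1 d1 d2 d3) (F l (l+3) y) \<longleftrightarrow> bit (G d1 d2 d3 e) (e y)"
    if "d1 < N" "d2 < N" "d3 < N" for d1 d2 d3
  proof -
    have "sat N I ce (e1 d1 d2 d3) (F l (l+3) y) \<longleftrightarrow> bit (G (e1 d1 d2 d3 l) (e1 d1 d2 d3 (Suc l)) (e1 d1 d2 d3 (Suc (Suc l))) (e1 d1 d2 d3)) (e1 d1 d2 d3 y)"
      using numgD[OF F[OF kl] order_refl _ ie1[OF that]] yl by simp
    then show ?thesis using Ge1 yl unfolding e1_def by simp
  qed
  have "sat N I ce e (msg bv F l y) \<longleftrightarrow> (\<exists>d1<N. \<exists>d2<N. \<exists>d3<N. sat N I ce (e1 d1 d2 d3) (splitf l bv (l+3)) \<and>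
     (\<forall>c1<N. \<forall>c2<N. \<forall>c3<N. sat N I ce (e2 d1 d2 d3 c1 c2 c3) (splitf (l+3) bv (l+6)) \<longrightarrow>
         \<not> sat N I ce (e2 d1 d2 d3 c1 c2 c3) (ltg (F l) (F (l+3)) (l+6))) \<and> sat N I ce (e1 d1 d2 d3) (F l (l+3) y))"
    unfolding msg_def e2_def e1_def by (simp only: sat.simps sat_derived)
  also have "\<dots> \<longleftrightarrow> (\<exists>d1<N. \<exists>d2<N. \<exists>d3<N. d1 + d2 + d3 = e bv \<and>
            (\<forall>c1<N. \<forall>c2<N. \<forall>c3<N. c1 + c2 + c3 = e bv \<longrightarrow> \<not> G d1 d2 d3 e < G c1 c2 c3 e) \<and> bit (G d1 d2 d3 e) (e y))"
    by (rule bex3_cong) (simp add: S1 S2 L Fy)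
  also have "\<dots> \<longleftrightarrow> bit (Max {G b1 b2 b3 e | b1 b2 b3. b1 + b2 + b3 = e bv}) (e y)"
    by (rule Max_bit_lemma[OF BN])
  finally show "sat N I ce e (msg bv F l y) \<longleftrightarrow> bit (Max {G b1 b2 b3 e | b1 b2 b3. b1 + b2 + b3 = e bv}) (e y)" .
next
  show "dep k (\<lambda>e. Max {G b1 b2 b3 e | b1 b2 b3. b1 + b2 + b3 = e bv})"
    unfolding dep_def
  proof (intro allI impI)
    fix e e' :: "nat \<Rightarrow> nat" assume a: "\<forall>z<k. e z = e' z"
    then have "G b1 b2 b3 e = G b1 b2 b3 e'" for b1 b2 b3 using Gdep unfolding dep_def by blast
    moreover have "e bv = e' bv" using a bvk by simp
    ultimately show "Max {G b1 b2 b3 e | b1 b2 b3. b1 + b2 + b3 = e bv} = Max {G b1 b2 b3 e' | b1 b2 b3. b1 + b2 + b3 = e' bv}"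
      by simp
  qed
next
  fix e
  let ?S = "{G b1 b2 b3 e | b1 b2 b3. b1 + b2 + b3 = e bv}"
  have "?S \<subseteq> (\<lambda>(b1, b2, b3). G b1 b2 b3 e) ` ({..e bv} \<times> {..e bv} \<times> {..e bv})"
  proof
    fix v assume "v \<in> ?S"
    then obtain b1 b2 b3 where v: "v = G b1 b2 b3 e" "b1 + b2 + b3 = e bv" by blast
    then show "v \<in> (\<lambda>(b1, b2, b3). G b1 b2 b3 e) ` ({..e bv} \<times> {..e bv} \<times> {..e bv})"
      by (intro image_eqI[of _ _ "(b1, b2, b3)"]) auto
  qed
  then have fin: "finite ?S" by (rule finite_subset) auto
  have "G (e bv) 0 0 e \<in> ?S" by (rule CollectI, rule exI[of _ "e bv"], rule exI[of _ 0], rule exI[of _ 0]) simp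
  then have ne: "?S \<noteq> {}" by blast
  have "Max ?S \<in> ?S" by (rule Max_in[OF fin ne])
  then show "Max ?S < 2 ^ N" using Gbd by auto
qed


definition opt :: "ks_input \<Rightarrow> nat set \<Rightarrow> nat \<Rightarrow> nat" where
  "opt x A b = Max ((\<lambda>S. \<Sum>i\<in>S. kp x i) ` {S. S \<subseteq> A \<and> (\<Sum>i\<in>S. kw x i) \<le> b})"

lemma opt_fin: "finite A \<Longrightarrow> finite {S. S \<subseteq> A \<and> (\<Sum>i\<in>S. kw x i) \<le> b}"
  by (rule finite_subset[of _ "Pow A"]) auto

lemma opt_ne: "{S. S \<subseteq> A \<and> (\<Sum>i\<in>S. kw x i) \<le> b} \<noteq> {}"
  by (rule, auto intro!: exI[of _ "{}"])
lemma opt_ne': "{} \<in> {S. S \<subseteq> A \<and> (\<Sum>i\<in>S. kw x i) \<le> b}"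
  by auto

lemma opt_ge: "finite A \<Longrightarrow> S \<subseteq> A \<Longrightarrow> (\<Sum>i\<in>S. kw x i) \<le> b \<Longrightarrow> (\<Sum>i\<in>S. kp x i) \<le> opt x A b"
  unfolding opt_def by (rule Max_ge) (auto intro: finite_imageI opt_fin)

lemma opt_ex: "finite A \<Longrightarrow> \<exists>S. S \<subseteq> A \<and> (\<Sum>i\<in>S. kw x i) \<le> b \<and> (\<Sum>i\<in>S. kp x i) = opt x A b"
proof -
  assume fA: "finite A"
  have "opt x A b \<in> (\<lambda>S. \<Sum>i\<in>S. kp x i) ` {S. S \<subseteq> A \<and> (\<Sum>i\<in>S. kw x i) \<le> b}"
    unfolding opt_def by (rule Max_in) (use opt_fin[OF fA] opt_ne' in auto)
  then obtain S where "S \<in> {S. S \<subseteq> A \<and> (\<Sum>i\<in>S. kw x i) \<le> b}" "opt x A b = (\<Sum>i\<in>S. kp x i)"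
    by (rule imageE)
  then show ?thesis by auto
qed

lemma opt_eqI: "finite A \<Longrightarrow> (\<And>S. S \<subseteq> A \<Longrightarrow> (\<Sum>i\<in>S. kw x i) \<le> b \<Longrightarrow> (\<Sum>i\<in>S. kp x i) \<le> v)
   \<Longrightarrow> S0 \<subseteq> A \<Longrightarrow> (\<Sum>i\<in>S0. kw x i) \<le> b \<Longrightarrow> (\<Sum>i\<in>S0. kp x i) = v \<Longrightarrow> opt x A b = v"
proof -
  assume fA: "finite A" and ub: "\<And>S. S \<subseteq> A \<Longrightarrow> (\<Sum>i\<in>S. kw x i) \<le> b \<Longrightarrow> (\<Sum>i\<in>S. kp x i) \<le> v"
    and s0: "S0 \<subseteq> A" "(\<Sum>i\<in>S0. kw x i) \<le> b" "(\<Sum>i\<in>S0. kp x i) = v"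
  obtain S where S: "S \<subseteq> A" "(\<Sum>i\<in>S. kw x i) \<le> b" "(\<Sum>i\<in>S. kp x i) = opt x A b"
    using opt_ex[OF fA] by blast
  have "opt x A b \<le> v" using ub[OF S(1,2)] S(3) by simp
  moreover have "v \<le> opt x A b" using opt_ge[OF fA s0(1,2)] s0(3) by simp
  ultimately show ?thesis by simp
qed

lemma opt_cong: "(\<And>i. i \<in> A \<Longrightarrow> kp x i = kp y i \<and> kw x i = kw y i) \<Longrightarrow> opt x A b = opt y A b"
proof -
  assume h: "\<And>i. i \<in> A \<Longrightarrow> kp x i = kp y i \<and> kw x i = kw y i"
  have w: "S \<subseteq> A \<Longrightarrow> (\<Sum>i\<in>S. kw x i) = (\<Sum>i\<in>S. kw y i)" for S
    using h by (intro sum.cong) auto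
  have p: "S \<subseteq> A \<Longrightarrow> (\<Sum>i\<in>S. kp x i) = (\<Sum>i\<in>S. kp y i)" for S
    using h by (intro sum.cong) auto
  have e: "{S. S \<subseteq> A \<and> (\<Sum>i\<in>S. kw x i) \<le> b} = {S. S \<subseteq> A \<and> (\<Sum>i\<in>S. kw y i) \<le> b}"
  proof (rule Collect_cong)
    fix S show "(S \<subseteq> A \<and> (\<Sum>i\<in>S. kw x i) \<le> b) = (S \<subseteq> A \<and> (\<Sum>i\<in>S. kw y i) \<le> b)"
      using w[of S] by auto
  qed
  have "(\<lambda>S. \<Sum>i\<in>S. kp x i) ` {S. S \<subseteq> A \<and> (\<Sum>i\<in>S. kw y i) \<le> b} = (\<lambda>S. \<Sum>i\<in>S. kp y i) ` {S. S \<subseteq> A \<and> (\<Sum>i\<in>S. kw y i) \<le> b}"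
    using p by (intro image_cong) auto
  then show ?thesis unfolding opt_def e by simp
qed

lemma opt_zero_ext:
  assumes "finite A'" "A \<subseteq> A'" "\<And>i. i \<in> A' - A \<Longrightarrow> kp x i = 0"
  shows "opt x A' b = opt x A b"
proof -
  have fA: "finite A" using assms(1,2) finite_subset by blast
  obtain S where S: "S \<subseteq> A" "(\<Sum>i\<in>S. kw x i) \<le> b" "(\<Sum>i\<in>S. kp x i) = opt x A b"
    using opt_ex[OF fA] by blast
  show ?thesis
  proof (rule opt_eqI[OF assms(1) _ _ S(2) S(3)])
    fix S' assume S': "S' \<subseteq> A'" "(\<Sum>i\<in>S'. kw x i) \<le> b"
    have fS': "finite S'" using S'(1) assms(1) finite_subset by blast
    have "(\<Sum>i\<in>S'. kp x i) = (\<Sum>i\<in>S' \<inter> A. kp x i) + (\<Sum>i\<in>S' - A. kp x i)"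
      by (rule sum.Int_Diff[OF fS'])
    also have "(\<Sum>i\<in>S' - A. kp x i) = 0" using assms(3) S'(1) by (intro sum.neutral) auto
    also have "(\<Sum>i\<in>S' \<inter> A. kw x i) \<le> (\<Sum>i\<in>S'. kw x i)" using fS' by (intro sum_mono2) auto
    then have "(\<Sum>i\<in>S' \<inter> A. kp x i) \<le> opt x A b" using S'(2) by (intro opt_ge[OF fA]) auto
    finally show "(\<Sum>i\<in>S'. kp x i) \<le> opt x A b" by simp
  next
    show "S \<subseteq> A'" using S(1) assms(2) by auto
  qed
qed


lemma fin3: "finite {f b1 b2 b3 | b1 b2 b3. b1 + b2 + b3 = (b::nat)}"
proof -
  have "{f b1 b2 b3 | b1 b2 b3. b1 + b2 + b3 = b} \<subseteq> (\<lambda>(b1, b2, b3). f b1 b2 b3) ` ({..b} \<times> {..b} \<times> {..b})"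
  proof
    fix v assume "v \<in> {f b1 b2 b3 | b1 b2 b3. b1 + b2 + b3 = b}"
    then obtain b1 b2 b3 where v: "v = f b1 b2 b3" "b1 + b2 + b3 = b" by blast
    then show "v \<in> (\<lambda>(b1, b2, b3). f b1 b2 b3) ` ({..b} \<times> {..b} \<times> {..b})"
      by (intro image_eqI[of _ _ "(b1, b2, b3)"]) auto
  qed
  then show ?thesis by (rule finite_subset) auto
qed

lemma in3: "b1 + b2 + b3 = b \<Longrightarrow> f b1 b2 b3 \<in> {f b1 b2 b3 | b1 b2 b3. b1 + b2 + b3 = (b::nat)}"
  by blast

lemma ne3: "{f b1 b2 b3 | b1 b2 b3. b1 + b2 + b3 = (b::nat)} \<noteq> {}"
  using in3[of b 0 0 b f] by auto

lemma Max3_cap: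
  fixes F G :: "nat \<Rightarrow> nat \<Rightarrow> nat \<Rightarrow> nat"
  assumes le: "\<And>b1 b2 b3. b1 + b2 + b3 = b \<Longrightarrow> F b1 b2 b3 \<le> G b1 b2 b3"
    and cp: "\<And>b1 b2 b3. b1 + b2 + b3 = b \<Longrightarrow> min (F b1 b2 b3) Cp = min (G b1 b2 b3) Cp"
  shows "min (Max {F b1 b2 b3 | b1 b2 b3. b1 + b2 + b3 = b}) Cp = min (Max {G b1 b2 b3 | b1 b2 b3. b1 + b2 + b3 = b}) Cp"
proof -
  let ?F = "{F b1 b2 b3 | b1 b2 b3. b1 + b2 + b3 = b}" and ?G = "{G b1 b2 b3 | b1 b2 b3. b1 + b2 + b3 = b}"
  have "Max ?F \<in> ?F" by (rule Max_in[OF fin3 ne3])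
  then obtain a1 a2 a3 where a: "Max ?F = F a1 a2 a3" "a1 + a2 + a3 = b" by blast
  have "G a1 a2 a3 \<in> ?G" using a(2) by blast
  then have "G a1 a2 a3 \<le> Max ?G" by (rule Max_ge[OF fin3])
  then have "F a1 a2 a3 \<le> Max ?G" using le[OF a(2)] by simp
  then have 1: "Max ?F \<le> Max ?G" using a(1) by simp
  have "Max ?G \<in> ?G" by (rule Max_in[OF fin3 ne3])
  then obtain c1 c2 c3 where c: "Max ?G = G c1 c2 c3" "c1 + c2 + c3 = b" by blast
  have "F c1 c2 c3 \<in> ?F" using c(2) by blast
  then have "F c1 c2 c3 \<le> Max ?F" by (rule Max_ge[OF fin3])
  then have "min (F c1 c2 c3) Cp \<le> min (Max ?F) Cp" by (intro min.mono) auto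
  moreover have "min (Max ?G) Cp = min (F c1 c2 c3) Cp" using cp[OF c(2)] c(1) by simp
  ultimately have 2: "min (Max ?G) Cp \<le> min (Max ?F) Cp" by simp
  have "min (Max ?F) Cp \<le> min (Max ?G) Cp" using 1 by (intro min.mono) auto
  then show ?thesis using 2 by (rule antisym)
qed

lemma min_cap3: "min (min a Cp + v + min c Cp) Cp = min (a + v + c) (Cp::nat)"
  by (auto simp: min_def)

lemma opt_decomp3:
  assumes fA: "finite A" and fB: "finite B" and dj: "A \<inter> B = {}" and iA: "i \<notin> A" and iB: "i \<notin> B"
  shows "opt x (A \<union> {i} \<union> B) b =
    Max {opt x A b1 + (if kw x i \<le> b2 then kp x i else 0) + opt x B b3 | b1 b2 b3. b1 + b2 + b3 = b}"
    (is "_ = Max ?M")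
proof -
  have fU: "finite (A \<union> {i} \<union> B)" using fA fB by simp
  have "Max ?M \<in> ?M" by (rule Max_in[OF fin3 ne3])
  then obtain b1 b2 b3 where bb: "Max ?M = opt x A b1 + (if kw x i \<le> b2 then kp x i else 0) + opt x B b3"
    "b1 + b2 + b3 = b" by blast
  obtain SA where SA: "SA \<subseteq> A" "(\<Sum>i\<in>SA. kw x i) \<le> b1" "(\<Sum>i\<in>SA. kp x i) = opt x A b1"
    using opt_ex[OF fA] by blast
  obtain SB where SB: "SB \<subseteq> B" "(\<Sum>i\<in>SB. kw x i) \<le> b3" "(\<Sum>i\<in>SB. kp x i) = opt x B b3"
    using opt_ex[OF fB] by blast
  define SI where "SI = (if kw x i \<le> b2 then {i} else {})"
  have fSA: "finite SA" using SA(1) fA finite_subset by blast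
  have fSB: "finite SB" using SB(1) fB finite_subset by blast
  have d1: "SA \<inter> SI = {}" "(SA \<union> SI) \<inter> SB = {}" using SA(1) SB(1) iA iB dj unfolding SI_def by auto
  have sumw: "(\<Sum>j\<in>SA \<union> SI \<union> SB. kw x j) = (\<Sum>j\<in>SA. kw x j) + (\<Sum>j\<in>SI. kw x j) + (\<Sum>j\<in>SB. kw x j)"
    using fSA fSB d1 by (simp add: sum.union_disjoint SI_def)
  have sump: "(\<Sum>j\<in>SA \<union> SI \<union> SB. kp x j) = (\<Sum>j\<in>SA. kp x j) + (\<Sum>j\<in>SI. kp x j) + (\<Sum>j\<in>SB. kp x j)"
    using fSA fSB d1 by (simp add: sum.union_disjoint SI_def)
  have wI: "(\<Sum>j\<in>SI. kw x j) \<le> b2" unfolding SI_def by auto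
  have pI: "(\<Sum>j\<in>SI. kp x j) = (if kw x i \<le> b2 then kp x i else 0)" unfolding SI_def by auto
  show ?thesis
  proof (rule opt_eqI[OF fU])
    fix S assume S: "S \<subseteq> A \<union> {i} \<union> B" "(\<Sum>j\<in>S. kw x j) \<le> b"
    define TA where "TA = S \<inter> A"
    define TI where "TI = S \<inter> {i}"
    define TB where "TB = S \<inter> B"
    have fT: "finite TA" "finite TI" "finite TB" unfolding TA_def TI_def TB_def using fA fB by auto
    have Seq: "S = TA \<union> TI \<union> TB" unfolding TA_def TI_def TB_def using S(1) by auto
    have dT: "TA \<inter> TI = {}" "(TA \<union> TI) \<inter> TB = {}" unfolding TA_def TI_def TB_def using iA iB dj by auto
    have sw: "(\<Sum>j\<in>S. kw x j) = (\<Sum>j\<in>TA. kw x j) + (\<Sum>j\<in>TI. kw x j) + (\<Sum>j\<in>TB. kw x j)"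
      unfolding Seq using fT dT by (simp add: sum.union_disjoint)
    have sp: "(\<Sum>j\<in>S. kp x j) = (\<Sum>j\<in>TA. kp x j) + (\<Sum>j\<in>TI. kp x j) + (\<Sum>j\<in>TB. kp x j)"
      unfolding Seq using fT dT by (simp add: sum.union_disjoint)
    define c1 where "c1 = (\<Sum>j\<in>TA. kw x j)"
    define c2 where "c2 = (\<Sum>j\<in>TI. kw x j)"
    define c3 where "c3 = b - c1 - c2"
    have c3b: "(\<Sum>j\<in>TB. kw x j) \<le> c3" using S(2) sw unfolding c1_def c2_def c3_def by linarith
    have csum: "c1 + c2 + c3 = b" using S(2) sw unfolding c1_def c2_def c3_def by linarith
    have hA: "(\<Sum>j\<in>TA. kp x j) \<le> opt x A c1" unfolding c1_def by (rule opt_ge[OF fA]) (auto simp: TA_def)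
    have hB: "(\<Sum>j\<in>TB. kp x j) \<le> opt x B c3" by (rule opt_ge[OF fB]) (use c3b in \<open>auto simp: TB_def\<close>)
    have hI: "(\<Sum>j\<in>TI. kp x j) \<le> (if kw x i \<le> c2 then kp x i else 0)"
      unfolding c2_def TI_def by (cases "i \<in> S") auto
    have "(\<Sum>j\<in>S. kp x j) \<le> opt x A c1 + (if kw x i \<le> c2 then kp x i else 0) + opt x B c3"
      unfolding sp using hA hB hI by linarith
    also have "\<dots> \<le> Max ?M"
    proof (rule Max_ge[OF fin3])
      show "opt x A c1 + (if kw x i \<le> c2 then kp x i else 0) + opt x B c3 \<in> ?M" using csum by blast
    qed
    finally show "(\<Sum>j\<in>S. kp x j) \<le> Max ?M" .
  next
    show "SA \<union> SI \<union> SB \<subseteq> A \<union> {i} \<union> B" using SA(1) SB(1) unfolding SI_def by auto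
    show "(\<Sum>j\<in>SA \<union> SI \<union> SB. kw x j) \<le> b" unfolding sumw using SA(2) SB(2) wI bb(2) by linarith
    show "(\<Sum>j\<in>SA \<union> SI \<union> SB. kp x j) = Max ?M" unfolding sump bb(1) pI SA(3) SB(3) by simp
  qed
qed


definition inIf :: "nat \<Rightarrow> nat \<Rightarrow> bgen" where
  "inIf s t l = Conj (Neg (Lt (C 0) (V s))) (Lt (C 0) (V t))"
definition guardf :: "nat \<Rightarrow> bgen" where
  "guardf b l = Exi l (Conj (isnf l (Suc l)) (Exi (Suc l) (Plus (V b) (V l) (V (Suc l)))))"
definition succf :: "nat \<Rightarrow> bgen" where
  "succf v l = Conj (Lt (C 0) (V v)) (Neg (Exi l (Conj (Lt (C 0) (V l)) (Lt (V l) (V v)))))"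
definition isZf :: "nat \<Rightarrow> bgen" where
  "isZf s l = Neg (Exi l (Lt (V l) (V s)))"
definition isMaxf :: "nat \<Rightarrow> bgen" where
  "isMaxf t l = Neg (Exi l (Lt (V t) (V l)))"
definition eqn :: "ngen \<Rightarrow> ngen \<Rightarrow> bgen" where
  "eqn \<phi> \<psi> l = Conj (Neg (ltg \<phi> \<psi> l)) (Neg (ltg \<psi> \<phi> l))"

lemma inIf: "s < k \<Longrightarrow> t < k \<Longrightarrow> boolg N I [i] k (inIf s t) (\<lambda>e. e s \<le> i \<and> i < e t)"
  unfolding boolg_def dep_def inIf_def by (auto simp: not_less)

lemma guardf:
  assumes adv: "I (SAdv 0) = advI nz kk" and NN: "N = nz + 2 ^ Suc kk" and bk: "b < k"
  shows "boolg N I ce k (guardf b) (\<lambda>e. e b + nz < N)"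
  unfolding boolg_def
proof (intro conjI allI impI)
  fix l e assume kl: "k \<le> l" and ie: "inr N l e"
  have nzN: "nz < N" using NN by simp
  have isn: "sat N I ce (e(l:=d)) (isnf l (Suc l)) \<longleftrightarrow> d = nz" if "d < N" for d
    using boolgD[OF isnf[where I=I and N=N and nz=nz and kk=kk and x=l and k="Suc l", OF adv NN lessI] order_refl inr_upd[OF ie that]] by simp
  have bl: "b \<noteq> l" "b \<noteq> Suc l" using bk kl by auto
  show "sat N I ce e (guardf b l) \<longleftrightarrow> e b + nz < N"
  proof
    assume "sat N I ce e (guardf b l)"
    then obtain d u where "d < N" "sat N I ce (e(l:=d)) (isnf l (Suc l))" "u < N" "e b + d = u"
      unfolding guardf_def using bl by auto
    then show "e b + nz < N" using isn by auto
  next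
    assume "e b + nz < N"
    then show "sat N I ce e (guardf b l)" unfolding guardf_def using bl isn nzN by (auto intro!: exI[of _ nz])
  qed
next
  show "dep k (\<lambda>e. e b + nz < N)" unfolding dep_def using bk by auto
qed

lemma succf: "v < k \<Longrightarrow> boolg N I [i] k (succf v) (\<lambda>e. e v = Suc i)"
  unfolding boolg_def
proof (intro conjI allI impI)
  fix l e assume vk: "v < k" and kl: "k \<le> l" and ie: "inr N l e"
  have vN: "e v < N" using ie vk kl by (auto intro: inrD)
  have vl: "v \<noteq> l" using vk kl by auto
  show "sat N I [i] e (succf v l) \<longleftrightarrow> e v = Suc i"
    unfolding succf_def using vl vN by auto
next
  assume "v < k" then show "dep k (\<lambda>e. e v = Suc i)" unfolding dep_def by auto
qed

lemma isZf: "s < k \<Longrightarrow> 0 < N \<Longrightarrow> boolg N I ce k (isZf s) (\<lambda>e. e s = 0)"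
  unfolding boolg_def dep_def isZf_def by auto

lemma maxlem: "(a::nat) < N \<Longrightarrow> (\<not> (\<exists>d<N. a < d)) = (a = N - 1)"
proof
  assume aN: "a < N" and h: "\<not> (\<exists>d<N. a < d)"
  show "a = N - 1"
  proof (rule ccontr)
    assume "a \<noteq> N - 1" then have "a < N - 1" using aN by linarith
    moreover have "N - 1 < N" using aN by linarith
    ultimately show False using h by blast
  qed
next
  assume "a < N" "a = N - 1" then show "\<not> (\<exists>d<N. a < d)" by auto
qed

lemma isMaxf: "t < k \<Longrightarrow> boolg N I ce k (isMaxf t) (\<lambda>e. e t = N - 1)"
  unfolding boolg_def
proof (intro conjI allI impI)
  fix l e assume "t < k" "k \<le> l" "inr N l e"
  then have tN: "e t < N" "t \<noteq> l" by (auto intro: inrD)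
  show "sat N I ce e (isMaxf t l) \<longleftrightarrow> e t = N - 1"
    unfolding isMaxf_def using maxlem[OF tN(1)] tN(2) by simp
next
  assume "t < k" then show "dep k (\<lambda>e. e t = N - 1)" unfolding dep_def by auto
qed

lemma eqn:
  assumes "numg N I ce k \<phi> a" "numg N I ce k \<psi> b"
  shows "boolg N I ce k (eqn \<phi> \<psi>) (\<lambda>e. a e = b e)"
proof -
  have A: "boolg N I ce k (ltg \<phi> \<psi>) (\<lambda>e. a e < b e)" "boolg N I ce k (ltg \<psi> \<phi>) (\<lambda>e. b e < a e)"
    using ltg assms by blast+
  show ?thesis unfolding boolg_def
  proof (intro conjI allI impI)
    fix l e assume "k \<le> l" "inr N l e"
    then show "sat N I ce e (eqn \<phi> \<psi> l) \<longleftrightarrow> a e = b e"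
      unfolding eqn_def using boolgD[OF A(1)] boolgD[OF A(2)] by auto
  next
    show "dep k (\<lambda>e. a e = b e)" using numg_dep[OF assms(1)] numg_dep[OF assms(2)] unfolding dep_def by metis
  qed
qed


definition sv :: "nat \<Rightarrow> nat \<Rightarrow> ks_input \<Rightarrow> nat \<Rightarrow> nat \<Rightarrow> nat \<Rightarrow> nat" where
  "sv n kk x s t b = (if b < 2 ^ Suc kk then min (opt x {s..<t} b) (2 ^ n) else 0)"

definition svf :: "nat \<Rightarrow> nat \<Rightarrow> ks_input \<Rightarrow> nat list \<Rightarrow> nat" where
  "svf n kk x vs = (case vs of [s, t, b] \<Rightarrow> sv n kk x s t b | _ \<Rightarrow> 0)"

lemma sv_le: "sv n kk x s t b \<le> 2 ^ n"
  unfolding sv_def by auto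

definition pg :: ngen where "pg = auxg (SCh 0) []"
definition wg :: ngen where "wg = auxg (SCh 1) []"
definition valg :: "nat \<Rightarrow> ngen" where "valg z = iteg (\<lambda>l. Neg (ltg (bitg z) wg l)) pg zerog"
definition Fk :: "nat \<Rightarrow> nat \<Rightarrow> nat \<Rightarrow> nat \<Rightarrow> ngen" where
  "Fk a iv tv x = addg (addg (auxg (SAux 1) [V a, C 0, V x]) (valg (Suc x))) (auxg (SAux 1) [V iv, V tv, V (Suc (Suc x))])"
definition newOpt :: "nat \<Rightarrow> nat \<Rightarrow> nat \<Rightarrow> nat \<Rightarrow> ngen" where
  "newOpt a iv tv bv = capg (msg bv (Fk a iv tv))"

definition Gv :: "nat \<Rightarrow> nat \<Rightarrow> ks_input \<Rightarrow> nat \<Rightarrow> nat \<Rightarrow> nat \<Rightarrow> nat \<Rightarrow> nat \<Rightarrow> nat \<Rightarrow> nat \<Rightarrow> nat \<Rightarrow> nat \<Rightarrow> nat" where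
  "Gv n kk x p w s i iv tv b1 b2 b3 = sv n kk x s i b1 + (if \<not> b2 mod 2 ^ Suc kk < w then p else 0) + sv n kk x iv tv b3"

lemma pow_N: assumes NN: "N = n + 2 ^ Suc kk" shows "3 * 2 ^ n < (2::nat) ^ N"
proof -
  have "(2::nat) \<le> 2 ^ Suc kk" by (metis one_le_numeral one_le_power power_Suc mult_le_mono2 mult.right_neutral)
  then have "n + 2 \<le> N" using NN by simp
  then have "(2::nat) ^ (n + 2) \<le> 2 ^ N" by (rule power_increasing) simp
  moreover have "3 * 2 ^ n < (2::nat) ^ (n + 2)" by simp
  ultimately show ?thesis by linarith
qed

lemma newOpt:
  assumes adv: "I (SAdv 0) = advI n kk" and NN: "N = n + 2 ^ Suc kk"
    and IRa: "\<And>vs j. (vs @ [j] \<in> I (SAux 1)) = (length vs = 3 \<and> (\<forall>v\<in>set vs. v < N) \<and> j < N \<and> bit (svf n kk x vs) j)"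
    and IRp: "\<And>vs j. (vs @ [j] \<in> I (SCh 0)) = (length vs = 0 \<and> (\<forall>v\<in>set vs. v < N) \<and> j < N \<and> bit p j)"
    and IRw: "\<And>vs j. (vs @ [j] \<in> I (SCh 1)) = (length vs = 0 \<and> (\<forall>v\<in>set vs. v < N) \<and> j < N \<and> bit w j)"
    and pw: "p < 2 ^ n" "w < 2 ^ n" and iN: "i < N"
    and k: "a < k" "iv < k" "tv < k" "bv < k"
  shows "numg N I [i] k (newOpt a iv tv bv)
     (\<lambda>e. min (Max {Gv n kk x p w (e a) i (e iv) (e tv) b1 b2 b3 | b1 b2 b3. b1 + b2 + b3 = e bv}) (2 ^ n))"
proof -
  have N0: "0 < N" using iN by simp
  have ceN: "\<forall>x\<in>set [i]. x < N" using iN by simp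
  have p3: "3 * 2 ^ n < (2::nat) ^ N" by (rule pow_N[OF NN])
  have pN: "p < 2 ^ N" "w < 2 ^ N" using pw p3 by linarith+
  have svN: "svf n kk x vs < 2 ^ N" for vs
  proof -
    have "sv n kk x s t b < 2 ^ N" for s t b using sv_le[of n kk x s t b] p3 by linarith
    then show ?thesis unfolding svf_def by (auto split: list.splits)
  qed
  have IRp': "\<And>vs j. (vs @ [j] \<in> I (SCh 0)) = (length vs = length ([]::tm list) \<and> (\<forall>v\<in>set vs. v < N) \<and> j < N \<and> bit p j)"
    using IRp by simp
  have IRw': "\<And>vs j. (vs @ [j] \<in> I (SCh 1)) = (length vs = length ([]::tm list) \<and> (\<forall>v\<in>set vs. v < N) \<and> j < N \<and> bit w j)"
    using IRw by simp
  have Pg: "numg N I [i] k' pg (\<lambda>e. p)" for k'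
    unfolding pg_def using auxg[where I=I and R="SCh 0" and ts="[]" and f="\<lambda>_. p", OF IRp' _ _ ceN N0] pN by simp
  have Wg: "numg N I [i] k' wg (\<lambda>e. w)" for k'
    unfolding wg_def using auxg[where I=I and R="SCh 1" and ts="[]" and f="\<lambda>_. w", OF IRw' _ _ ceN N0] pN by simp
  have F: "numg N I [i] (xx+3) (Fk a iv tv xx) (\<lambda>e. Gv n kk x p w (e a) i (e iv) (e tv) (e xx) (e (Suc xx)) (e (Suc (Suc xx))))"
    if xx: "k \<le> xx" for xx
  proof -
    have IR3: "\<And>vs j. (vs @ [j] \<in> I (SAux 1)) = (length vs = length ts \<and> (\<forall>v\<in>set vs. v < N) \<and> j < N \<and> bit (svf n kk x vs) j)"
      if "length ts = 3" for ts :: "tm list" using IRa that by simp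
    have A1: "numg N I [i] (xx+3) (auxg (SAux 1) [V a, C 0, V xx]) (\<lambda>e. svf n kk x (map (tval [i] e) [V a, C 0, V xx]))"
      by (rule auxg[where I=I and R="SAux 1", OF IR3 svN _ ceN N0]) (use k xx in auto)
    then have A1: "numg N I [i] (xx+3) (auxg (SAux 1) [V a, C 0, V xx]) (\<lambda>e. sv n kk x (e a) i (e xx))"
      by (simp add: svf_def)
    have A2: "numg N I [i] (xx+3) (auxg (SAux 1) [V iv, V tv, V (Suc (Suc xx))]) (\<lambda>e. svf n kk x (map (tval [i] e) [V iv, V tv, V (Suc (Suc xx))]))"
      by (rule auxg[where I=I and R="SAux 1", OF IR3 svN _ ceN N0]) (use k xx in auto)
    then have A2: "numg N I [i] (xx+3) (auxg (SAux 1) [V iv, V tv, V (Suc (Suc xx))]) (\<lambda>e. sv n kk x (e iv) (e tv) (e (Suc (Suc xx))))"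
      by (simp add: svf_def)
    have B: "numg N I [i] (xx+3) (bitg (Suc xx)) (\<lambda>e. e (Suc xx) mod 2 ^ Suc kk)"
      by (rule bitg[where I=I, OF adv NN]) simp
    have L: "boolg N I [i] (xx+3) (\<lambda>l. Neg (ltg (bitg (Suc xx)) wg l)) (\<lambda>e. \<not> e (Suc xx) mod 2 ^ Suc kk < w)"
      using ltg[OF B Wg] unfolding boolg_def dep_def by auto
    have Vg: "numg N I [i] (xx+3) (valg (Suc xx)) (\<lambda>e. if \<not> e (Suc xx) mod 2 ^ Suc kk < w then p else 0)"
      unfolding valg_def by (rule iteg[OF L Pg zerog])
    have S1: "numg N I [i] (xx+3) (addg (auxg (SAux 1) [V a, C 0, V xx]) (valg (Suc xx)))
       (\<lambda>e. sv n kk x (e a) i (e xx) + (if \<not> e (Suc xx) mod 2 ^ Suc kk < w then p else 0))"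
    proof (rule addg[OF A1 Vg])
      fix e
      have "sv n kk x (e a) i (e xx) \<le> 2 ^ n" by (rule sv_le)
      then show "sv n kk x (e a) i (e xx) + (if \<not> e (Suc xx) mod 2 ^ Suc kk < w then p else 0) < 2 ^ N"
        using pw p3 by auto
    qed
    have S2: "numg N I [i] (xx+3) (Fk a iv tv xx)
       (\<lambda>e. (sv n kk x (e a) i (e xx) + (if \<not> e (Suc xx) mod 2 ^ Suc kk < w then p else 0)) + sv n kk x (e iv) (e tv) (e (Suc (Suc xx))))"
      unfolding Fk_def
    proof (rule addg[OF S1 A2])
      fix e
      have "sv n kk x (e a) i (e xx) \<le> 2 ^ n" "sv n kk x (e iv) (e tv) (e (Suc (Suc xx))) \<le> 2 ^ n" by (rule sv_le)+
      then show "sv n kk x (e a) i (e xx) + (if \<not> e (Suc xx) mod 2 ^ Suc kk < w then p else 0) + sv n kk x (e iv) (e tv) (e (Suc (Suc xx))) < 2 ^ N"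
        using pw p3 by auto
    qed
    then show ?thesis unfolding Gv_def by simp
  qed
  have M: "numg N I [i] k (msg bv (Fk a iv tv)) (\<lambda>e. Max {Gv n kk x p w (e a) i (e iv) (e tv) b1 b2 b3 | b1 b2 b3. b1 + b2 + b3 = e bv})"
  proof (rule msg[where G="\<lambda>b1 b2 b3 e. Gv n kk x p w (e a) i (e iv) (e tv) b1 b2 b3", OF k(4)])
    fix xx assume "k \<le> xx" then show "numg N I [i] (xx + 3) (Fk a iv tv xx)
          (\<lambda>e. Gv n kk x p w (e a) i (e iv) (e tv) (e xx) (e (Suc xx)) (e (Suc (Suc xx))))" by (rule F)
  next
    fix b1 b2 b3 show "dep k (\<lambda>e. Gv n kk x p w (e a) i (e iv) (e tv) b1 b2 b3)"
      unfolding dep_def using k by auto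
  next
    fix b1 b2 b3 and e :: "nat \<Rightarrow> nat"
    have "sv n kk x (e a) i b1 \<le> 2 ^ n" "sv n kk x (e iv) (e tv) b3 \<le> 2 ^ n" by (rule sv_le)+
    then show "Gv n kk x p w (e a) i (e iv) (e tv) b1 b2 b3 < 2 ^ N" unfolding Gv_def using pw p3 by auto
  qed
  show ?thesis unfolding newOpt_def by (rule capg[where I=I, OF adv NN M])
qed


lemma newopt_val:
  assumes si: "s \<le> i" "i < t" and bm: "b < 2 ^ Suc kk"
  shows "min (Max {Gv n kk x p w s i (Suc i) t b1 b2 b3 | b1 b2 b3. b1 + b2 + b3 = b}) (2 ^ n)
       = sv n kk (ks_apply (ChItem i p w) x) s t b"
proof -
  let ?x' = "ks_apply (ChItem i p w) x"
  have U: "{s..<t} = {s..<i} \<union> {i} \<union> {Suc i..<t}" using si by auto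
  have D: "opt ?x' {s..<t} b = Max {opt ?x' {s..<i} b1 + (if kw ?x' i \<le> b2 then kp ?x' i else 0) + opt ?x' {Suc i..<t} b3 | b1 b2 b3. b1 + b2 + b3 = b}"
    unfolding U by (rule opt_decomp3) auto
  have c1: "opt x {s..<i} b1 = opt ?x' {s..<i} b1" for b1 by (rule opt_cong) auto
  have c3: "opt x {Suc i..<t} b3 = opt ?x' {Suc i..<t} b3" for b3 by (rule opt_cong) auto
  have "min (Max {Gv n kk x p w s i (Suc i) t b1 b2 b3 | b1 b2 b3. b1 + b2 + b3 = b}) (2 ^ n)
     = min (Max {opt ?x' {s..<i} b1 + (if kw ?x' i \<le> b2 then kp ?x' i else 0) + opt ?x' {Suc i..<t} b3 | b1 b2 b3. b1 + b2 + b3 = b}) (2 ^ n)"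
  proof (rule Max3_cap)
    fix b1 b2 b3 assume h: "b1 + b2 + b3 = b"
    then have lt: "b1 < 2 ^ Suc kk" "b2 < 2 ^ Suc kk" "b3 < 2 ^ Suc kk" using bm by linarith+
    have G: "Gv n kk x p w s i (Suc i) t b1 b2 b3 = min (opt ?x' {s..<i} b1) (2 ^ n) + (if kw ?x' i \<le> b2 then kp ?x' i else 0) + min (opt ?x' {Suc i..<t} b3) (2 ^ n)"
      unfolding Gv_def sv_def using lt c1 c3 by (simp add: not_less)
    show "Gv n kk x p w s i (Suc i) t b1 b2 b3 \<le> opt ?x' {s..<i} b1 + (if kw ?x' i \<le> b2 then kp ?x' i else 0) + opt ?x' {Suc i..<t} b3"
      unfolding G by (intro add_mono) auto
    show "min (Gv n kk x p w s i (Suc i) t b1 b2 b3) (2 ^ n) = min (opt ?x' {s..<i} b1 + (if kw ?x' i \<le> b2 then kp ?x' i else 0) + opt ?x' {Suc i..<t} b3) (2 ^ n)"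
      unfolding G by (rule min_cap3)
  qed
  also have "\<dots> = sv n kk ?x' s t b" unfolding sv_def D using bm by simp
  finally show ?thesis .
qed

lemma knap_iff:
  assumes z: "\<And>i. n \<le> i \<Longrightarrow> kp x i = 0" and T: "kT x < 2 ^ n" and Bm: "kB x < 2 ^ Suc kk"
    and NN: "N = n + 2 ^ Suc kk"
  shows "(\<not> sv n kk x 0 (N - 1) (kB x) < kT x) \<longleftrightarrow> knapsack n x"
proof -
  have "(1::nat) \<le> 2 ^ Suc kk" by (rule one_le_power) simp
  then have nN: "n \<le> N - 1" using NN by linarith
  have o: "opt x {0..<N - 1} (kB x) = opt x {0..<n} (kB x)"
    by (rule opt_zero_ext) (use nN z in auto)
  have "(\<not> sv n kk x 0 (N - 1) (kB x) < kT x) \<longleftrightarrow> kT x \<le> opt x {0..<n} (kB x)"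
    unfolding sv_def o using Bm T by auto
  also have "\<dots> \<longleftrightarrow> knapsack n x"
  proof
    assume "kT x \<le> opt x {0..<n} (kB x)"
    moreover obtain S where "S \<subseteq> {0..<n}" "(\<Sum>i\<in>S. kw x i) \<le> kB x" "(\<Sum>i\<in>S. kp x i) = opt x {0..<n} (kB x)"
      using opt_ex[of "{0..<n}" x "kB x"] by blast
    ultimately show "knapsack n x" unfolding knapsack_def by auto
  next
    assume "knapsack n x"
    then obtain S where "S \<subseteq> {0..<n}" "kT x \<le> (\<Sum>i\<in>S. kp x i)" "(\<Sum>i\<in>S. kw x i) \<le> kB x"
      unfolding knapsack_def by auto
    then show "kT x \<le> opt x {0..<n} (kB x)" using opt_ge[of "{0..<n}" S x "kB x"] by auto
  qed
  finally show ?thesis .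
qed


definition advf :: "nat \<Rightarrow> advice" where
  "advf k = (2 ^ Suc k, \<lambda>j. if j = 0 then advrel k else {})"

definition auxrel :: "nat \<Rightarrow> nat \<Rightarrow> ks_input \<Rightarrow> nat list set" where
  "auxrel n kk x = {[s, t, b, j] | s t b j. s < n + 2 ^ Suc kk \<and> t < n + 2 ^ Suc kk \<and> b < n + 2 ^ Suc kk
      \<and> j < n + 2 ^ Suc kk \<and> bit (sv n kk x s t b) j}"

definition Inv :: "nat \<Rightarrow> nat \<Rightarrow> ks_input \<Rightarrow> (nat \<Rightarrow> nat list set) \<Rightarrow> bool" where
  "Inv n kk x aux \<longleftrightarrow> (\<forall>i. kp x i < 2 ^ n \<and> kw x i < 2 ^ n) \<and> (\<forall>i. n \<le> i \<longrightarrow> kp x i = 0 \<and> kw x i = 0)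
     \<and> kB x < 2 ^ n \<and> kT x < 2 ^ n \<and> aux 1 = auxrel n kk x"

definition Qform :: "ngen \<Rightarrow> bgen \<Rightarrow> fo" where
  "Qform Bg Rg = Exi 0 (Exi 1 (Exi 2 (Conj (isZf 0 3) (Conj (isMaxf 1 3) (Conj (guardf 2 3)
      (Conj (eqn (bitg 2) Bg 3) (Rg 3)))))))"

definition stored4 :: fo where "stored4 = Atom (SAux 1) [V 0, V 1, V 2, V 3]"

definition updf :: "ks_op \<Rightarrow> nat \<Rightarrow> fo" where
  "updf op j = (if j = 0 then
       (case op of
          OpItem \<Rightarrow> Qform (auxg SB []) (\<lambda>l. Exi l (Conj (succf l (Suc l)) (Neg (ltg (newOpt 0 l 1 2) (auxg ST []) (Suc l)))))
        | OpB \<Rightarrow> Qform (auxg (SCh 0) []) (\<lambda>l. Neg (ltg (auxg (SAux 1) [V 0, V 1, V 2]) (auxg ST []) l))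
        | OpT \<Rightarrow> Qform (auxg SB []) (\<lambda>l. Neg (ltg (auxg (SAux 1) [V 0, V 1, V 2]) (auxg (SCh 0) []) l)))
     else (case op of
          OpItem \<Rightarrow> FOr (Conj (Neg (inIf 0 1 4)) stored4)
                     (Conj (inIf 0 1 4) (Conj (guardf 2 4) (Exi 4 (Conj (succf 4 5) (newOpt 0 4 1 2 5 3)))))
        | _ \<Rightarrow> stored4))"

lemma IR_unary:
  fixes v :: nat
  assumes "v < 2 ^ n" "n < N"
  shows "(vs @ [j] \<in> {[j] | j. j < n \<and> bit v j}) = (length vs = 0 \<and> (\<forall>u\<in>set vs. u < N) \<and> j < N \<and> bit v j)"
proof -
  have "bit v j \<Longrightarrow> j < n" using bit_ge_N[OF assms(1)] by (meson not_le)
  then show ?thesis using assms(2) by (cases vs) auto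
qed

lemma IR_aux:
  "(vs @ [j] \<in> auxrel n kk x) = (length vs = 3 \<and> (\<forall>v\<in>set vs. v < n + 2 ^ Suc kk) \<and> j < n + 2 ^ Suc kk \<and> bit (svf n kk x vs) j)"
proof (cases vs rule: list.exhaust)
  case Nil then show ?thesis unfolding auxrel_def by auto
next
  case (Cons s r1) note c1 = this
  show ?thesis
  proof (cases r1)
    case Nil then show ?thesis using c1 unfolding auxrel_def by auto
  next
    case (Cons t r2) note c2 = this
    show ?thesis
    proof (cases r2)
      case Nil then show ?thesis using c1 c2 unfolding auxrel_def by auto
    next
      case (Cons b r3) note c3 = this
      show ?thesis
      proof (cases r3)
        case Nil then show ?thesis using c1 c2 c3 unfolding auxrel_def svf_def by auto
      next
        case (Cons q r4) then show ?thesis using c1 c2 c3 unfolding auxrel_def by auto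
      qed
    qed
  qed
qed

lemma adv_eq: "map (\<lambda>v. v + n) ` advrel kk = advI n kk"
proof
  show "map (\<lambda>v. v + n) ` advrel kk \<subseteq> advI n kk" unfolding advrel_def advI_def by auto
next
  show "advI n kk \<subseteq> map (\<lambda>v. v + n) ` advrel kk"
  proof
    fix l assume "l \<in> advI n kk"
    then obtain j where j: "l = [j + n, 2 ^ j + n]" "j \<le> kk" unfolding advI_def by auto
    then show "l \<in> map (\<lambda>v. v + n) ` advrel kk"
      by (intro image_eqI[of _ _ "[j, 2 ^ j]"]) (auto simp: advrel_def)
  qed
qed

lemma struct_facts:
  "ks_struct n x aux (advf kk) cs (SAux 1) = aux 1"
  "ks_struct n x aux (advf kk) cs (SAdv 0) = advI n kk"
  "ks_struct n x aux (advf kk) cs SB = {[j] | j. j < n \<and> bit (kB x) j}"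
  "ks_struct n x aux (advf kk) cs ST = {[j] | j. j < n \<and> bit (kT x) j}"
  "k < length cs \<Longrightarrow> ks_struct n x aux (advf kk) cs (SCh k) = {[j] | j. j \<in> cs ! k}"
  unfolding ks_struct_def advf_def by (auto simp: adv_eq)

lemma bitset_rel: "{[j] | j. j \<in> bitset n v} = {[j] | j. j < n \<and> bit v j}"
  unfolding bitset_def by auto


lemma Qform_sem:
  assumes adv: "I (SAdv 0) = advI n kk" and NN: "N = n + 2 ^ Suc kk"
    and Bg: "numg N I ce 3 Bg (\<lambda>e. Bv)" and Bv: "Bv < 2 ^ Suc kk"
    and Rg: "boolg N I ce 3 Rg (\<lambda>e. Q (e 0) (e 1) (e 2))"
  shows "sat N I ce (\<lambda>_. 0) (Qform Bg Rg) \<longleftrightarrow> Q 0 (N - 1) Bv"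
proof -
  have N0: "0 < N" using NN by simp
  define e3 where "e3 s t b = (\<lambda>_::nat. 0::nat)(0:=s, 1:=t, 2:=b)" for s t b
  have ie: "inr N 3 (e3 s t b)" if "s < N" "t < N" "b < N" for s t b
    using that N0 unfolding inr_def e3_def by (auto simp: less_Suc_eq numeral_eq_Suc)
  have Z: "boolg N I ce 3 (isZf 0) (\<lambda>e. e 0 = 0)" by (rule isZf) (use N0 in auto)
  have Mx: "boolg N I ce 3 (isMaxf 1) (\<lambda>e. e 1 = N - 1)" by (rule isMaxf) simp
  have Gd: "boolg N I ce 3 (guardf 2) (\<lambda>e. e 2 + n < N)" by (rule guardf[where I=I, OF adv NN]) simp
  have Eq: "boolg N I ce 3 (eqn (bitg 2) Bg) (\<lambda>e. e 2 mod 2 ^ Suc kk = Bv)"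
    by (rule eqn[OF bitg[where I=I, OF adv NN] Bg]) simp
  have body: "sat N I ce (e3 s t b) (Conj (isZf 0 3) (Conj (isMaxf 1 3) (Conj (guardf 2 3)
      (Conj (eqn (bitg 2) Bg 3) (Rg 3))))) \<longleftrightarrow> s = 0 \<and> t = N - 1 \<and> b + n < N \<and> b mod 2 ^ Suc kk = Bv \<and> Q s t b"
    if "s < N" "t < N" "b < N" for s t b
    using boolgD[OF Z order_refl ie[OF that]] boolgD[OF Mx order_refl ie[OF that]] boolgD[OF Gd order_refl ie[OF that]]
      boolgD[OF Eq order_refl ie[OF that]] boolgD[OF Rg order_refl ie[OF that]]
    unfolding e3_def by simp
  have "sat N I ce (\<lambda>_. 0) (Qform Bg Rg) \<longleftrightarrow> (\<exists>s<N. \<exists>t<N. \<exists>b<N. sat N I ce (e3 s t b) (Conj (isZf 0 3) (Conj (isMaxf 1 3) (Conj (guardf 2 3)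
      (Conj (eqn (bitg 2) Bg 3) (Rg 3))))))"
    unfolding Qform_def e3_def by simp
  also have "\<dots> \<longleftrightarrow> (\<exists>s<N. \<exists>t<N. \<exists>b<N. s = 0 \<and> t = N - 1 \<and> b + n < N \<and> b mod 2 ^ Suc kk = Bv \<and> Q s t b)"
    by (rule bex3_cong) (rule body)
  also have "\<dots> \<longleftrightarrow> Q 0 (N - 1) Bv"
  proof
    assume "\<exists>s<N. \<exists>t<N. \<exists>b<N. s = 0 \<and> t = N - 1 \<and> b + n < N \<and> b mod 2 ^ Suc kk = Bv \<and> Q s t b"
    then obtain b where b: "b + n < N" "b mod 2 ^ Suc kk = Bv" "Q 0 (N - 1) b" by blast
    have "b < 2 ^ Suc kk" using b(1) NN by simp
    then have "b = Bv" using b(2) by simp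
    then show "Q 0 (N - 1) Bv" using b(3) by simp
  next
    assume q: "Q 0 (N - 1) Bv"
    have "Bv + n < N" "Bv < N" using Bv NN by simp_all
    then show "\<exists>s<N. \<exists>t<N. \<exists>b<N. s = 0 \<and> t = N - 1 \<and> b + n < N \<and> b mod 2 ^ Suc kk = Bv \<and> Q s t b"
      using q Bv N0 by (intro bex3I[of 0 N "N - 1" Bv]) auto
  qed
  finally show ?thesis .
qed


lemma sv_cong: "(\<And>i. s \<le> i \<Longrightarrow> i < t \<Longrightarrow> kp x i = kp y i \<and> kw x i = kw y i) \<Longrightarrow> sv n kk x s t b = sv n kk y s t b"
  unfolding sv_def by (subst opt_cong[of "{s..<t}" x y]) auto

lemma step_item:
  assumes n1: "1 \<le> n" and inv: "Inv n kk x aux" and iv: "i < n" and pw: "p < 2 ^ n" "w < 2 ^ n"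
    and Bk: "kB x \<le> kk"
    and NN: "N = n + 2 ^ Suc kk" and II: "I = ks_struct n x aux (advf kk) [bitset n p, bitset n w]"
    and xx: "x' = ks_apply (ChItem i p w) x"
  shows "sat N I [i] (\<lambda>_. 0) (updf OpItem 0) \<longleftrightarrow> knapsack n x'"
    and "s < N \<Longrightarrow> t < N \<Longrightarrow> b < N \<Longrightarrow> j < N \<Longrightarrow>
         sat N I [i] (\<lambda>v. if v < 4 then [s, t, b, j] ! v else 0) (updf OpItem 1) \<longleftrightarrow> bit (sv n kk x' s t b) j"
proof -
  have nN: "n < N" using NN by simp
  have iN: "i < N" "Suc i < N" using iv nN by auto
  have m1: "kk < 2 ^ Suc kk" using less_exp[of "Suc kk"] by simp
  have Bm: "kB x < 2 ^ Suc kk" using Bk m1 by linarith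
  have invs: "kB x < 2 ^ n" "kT x < 2 ^ n" "aux 1 = auxrel n kk x" "\<And>i. n \<le> i \<Longrightarrow> kp x i = 0 \<and> kw x i = 0"
    using inv unfolding Inv_def by auto
  have adv: "I (SAdv 0) = advI n kk" unfolding II by (rule struct_facts)
  have IRa: "\<And>vs j. (vs @ [j] \<in> I (SAux 1)) = (length vs = 3 \<and> (\<forall>v\<in>set vs. v < N) \<and> j < N \<and> bit (svf n kk x vs) j)"
    unfolding II struct_facts invs(3) IR_aux NN ..
  have IRp: "\<And>vs j. (vs @ [j] \<in> I (SCh 0)) = (length vs = 0 \<and> (\<forall>v\<in>set vs. v < N) \<and> j < N \<and> bit p j)"
    unfolding II using struct_facts(5)[of 0 "[bitset n p, bitset n w]"] bitset_rel IR_unary[OF pw(1) nN] by simp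
  have IRw: "\<And>vs j. (vs @ [j] \<in> I (SCh 1)) = (length vs = 0 \<and> (\<forall>v\<in>set vs. v < N) \<and> j < N \<and> bit w j)"
    unfolding II using struct_facts(5)[of 1 "[bitset n p, bitset n w]"] bitset_rel IR_unary[OF pw(2) nN] by simp
  have IRB: "\<And>vs j. (vs @ [j] \<in> I SB) = (length vs = length ([]::tm list) \<and> (\<forall>v\<in>set vs. v < N) \<and> j < N \<and> bit (kB x) j)"
    unfolding II struct_facts using IR_unary[OF invs(1) nN] by simp
  have IRT: "\<And>vs j. (vs @ [j] \<in> I ST) = (length vs = length ([]::tm list) \<and> (\<forall>v\<in>set vs. v < N) \<and> j < N \<and> bit (kT x) j)"
    unfolding II struct_facts using IR_unary[OF invs(2) nN] by simp
  have p3: "3 * 2 ^ n < (2::nat) ^ N" by (rule pow_N[OF NN])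
  have BN: "kB x < 2 ^ N" "kT x < 2 ^ N" using invs(1,2) p3 by linarith+
  have ceN: "\<forall>x\<in>set [i]. x < N" using iN by simp
  have N0: "0 < N" using nN by simp
  have Bg: "numg N I [i] k (auxg SB []) (\<lambda>e. kB x)" for k
    using auxg[where I=I and R=SB and ts="[]" and f="\<lambda>_. kB x", OF IRB _ _ ceN N0] BN by simp
  have Tg: "numg N I [i] k (auxg ST []) (\<lambda>e. kT x)" for k
    using auxg[where I=I and R=ST and ts="[]" and f="\<lambda>_. kT x", OF IRT _ _ ceN N0] BN by simp
  have NO: "numg N I [i] k (newOpt a iv tv bv)
     (\<lambda>e. min (Max {Gv n kk x p w (e a) i (e iv) (e tv) b1 b2 b3 | b1 b2 b3. b1 + b2 + b3 = e bv}) (2 ^ n))"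
    if "a < k" "iv < k" "tv < k" "bv < k" for k a iv tv bv
    by (rule newOpt[OF adv NN IRa IRp IRw pw iN(1) that])
  have x'eq: "kB x' = kB x" "kT x' = kT x" "kp x' i = p" "kw x' i = w"
    "\<And>i'. i' \<noteq> i \<Longrightarrow> kp x' i' = kp x i' \<and> kw x' i' = kw x i'" unfolding xx by auto
  let ?Q = "\<lambda>s t b. \<not> min (Max {Gv n kk x p w s i (Suc i) t b1 b2 b3 | b1 b2 b3. b1 + b2 + b3 = b}) (2 ^ n) < kT x"
  have Rg: "boolg N I [i] 3 (\<lambda>l. Exi l (Conj (succf l (Suc l)) (Neg (ltg (newOpt 0 l 1 2) (auxg ST []) (Suc l)))))
      (\<lambda>e. ?Q (e 0) (e 1) (e 2))"
    unfolding boolg_def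
  proof (intro conjI allI impI)
    fix l e assume l3: "3 \<le> l" and ie: "inr N l e"
    have S: "sat N I [i] (e(l:=d)) (succf l (Suc l)) \<longleftrightarrow> d = Suc i" if "d < N" for d
      using boolgD[OF succf[of l "Suc l" N I i] order_refl inr_upd[OF ie that]] by simp
    have L: "sat N I [i] (e(l:=d)) (ltg (newOpt 0 l 1 2) (auxg ST []) (Suc l)) \<longleftrightarrow>
        min (Max {Gv n kk x p w (e 0) i d (e 1) b1 b2 b3 | b1 b2 b3. b1 + b2 + b3 = e 2}) (2 ^ n) < kT x"
      if "d < N" for d
      using boolgD[OF ltg[OF NO[of 0 "Suc l" l 1 2] Tg] order_refl inr_upd[OF ie that]] l3 by simp
    show "sat N I [i] e (Exi l (Conj (succf l (Suc l)) (Neg (ltg (newOpt 0 l 1 2) (auxg ST []) (Suc l))))) \<longleftrightarrow> ?Q (e 0) (e 1) (e 2)"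
      using S L iN(2) by auto
  next
    show "dep 3 (\<lambda>e. ?Q (e 0) (e 1) (e 2))" unfolding dep_def by simp
  qed
  have "sat N I [i] (\<lambda>_. 0) (updf OpItem 0) \<longleftrightarrow> ?Q 0 (N - 1) (kB x)"
  proof -
    have "updf OpItem 0 = Qform (auxg SB []) (\<lambda>l. Exi l (Conj (succf l (Suc l)) (Neg (ltg (newOpt 0 l 1 2) (auxg ST []) (Suc l)))))"
      unfolding updf_def by simp
    then show ?thesis using Qform_sem[OF adv NN Bg Bm Rg] by simp
  qed
  also have "\<dots> \<longleftrightarrow> \<not> sv n kk x' 0 (N - 1) (kB x') < kT x'"
    using newopt_val[of 0 i "N - 1" "kB x" kk n x p w] iv nN Bm x'eq xx by simp
  also have "\<dots> \<longleftrightarrow> knapsack n x'"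
  proof (rule knap_iff[OF _ _ _ NN])
    fix i' assume "n \<le> i'" then show "kp x' i' = 0" using x'eq invs(4) iv by (cases "i' = i") auto
  qed (use x'eq invs Bm in auto)
  finally show "sat N I [i] (\<lambda>_. 0) (updf OpItem 0) \<longleftrightarrow> knapsack n x'" .
  show "sat N I [i] (\<lambda>v. if v < 4 then [s, t, b, j] ! v else 0) (updf OpItem 1) \<longleftrightarrow> bit (sv n kk x' s t b) j"
    if sN: "s < N" and tN: "t < N" and bN: "b < N" and jN: "j < N"
  proof -
  define e where "e = (\<lambda>v. if v < 4 then [s, t, b, j] ! v else 0)"
  have ev: "e 0 = s" "e 1 = t" "e 2 = b" "e 3 = j" unfolding e_def by simp_all
  have ie: "inr N 4 e" unfolding inr_def e_def using sN tN bN jN by (auto simp: less_Suc_eq numeral_eq_Suc)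
  have U: "updf OpItem 1 = FOr (Conj (Neg (inIf 0 1 4)) stored4)
                     (Conj (inIf 0 1 4) (Conj (guardf 2 4) (Exi 4 (Conj (succf 4 5) (newOpt 0 4 1 2 5 3)))))"
    unfolding updf_def by simp
  have A1: "sat N I [i] e (inIf 0 1 4) \<longleftrightarrow> s \<le> i \<and> i < t"
    using boolgD[OF inIf[of 0 4 1 N I i] order_refl ie] ev by simp
  have A2: "sat N I [i] e stored4 \<longleftrightarrow> bit (sv n kk x s t b) j"
    using IRa[of "[s, t, b]" j] sN tN bN jN ev unfolding stored4_def by (simp add: svf_def)
  have A3: "sat N I [i] e (guardf 2 4) \<longleftrightarrow> b + n < N"
    using boolgD[OF guardf[where I=I, OF adv NN, of 2 4] order_refl ie] ev by simp
  have A4: "sat N I [i] (e(4:=d)) (succf 4 5) \<longleftrightarrow> d = Suc i" if "d < N" for d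
    using boolgD[OF succf[of 4 5 N I i] order_refl] inr_upd[OF ie that] by (simp add: numeral_eq_Suc)
  have A5: "sat N I [i] (e(4:=d)) (newOpt 0 4 1 2 5 3) \<longleftrightarrow>
      bit (min (Max {Gv n kk x p w s i d t b1 b2 b3 | b1 b2 b3. b1 + b2 + b3 = b}) (2 ^ n)) j" if "d < N" for d
    using numgD[OF NO[of 0 5 4 1 2] order_refl _ ] inr_upd[OF ie that] ev by (simp add: numeral_eq_Suc)
  have A45: "sat N I [i] e (Exi 4 (Conj (succf 4 5) (newOpt 0 4 1 2 5 3))) \<longleftrightarrow>
      bit (min (Max {Gv n kk x p w s i (Suc i) t b1 b2 b3 | b1 b2 b3. b1 + b2 + b3 = b}) (2 ^ n)) j"
    using A4 A5 iN(2) by auto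
  show "sat N I [i] (\<lambda>v. if v < 4 then [s, t, b, j] ! v else 0) (updf OpItem 1) \<longleftrightarrow> bit (sv n kk x' s t b) j"
    unfolding e_def[symmetric] U
  proof (cases "s \<le> i \<and> i < t")
    case False
    have "sv n kk x s t b = sv n kk x' s t b" using False x'eq by (intro sv_cong) auto
    then show "sat N I [i] e (FOr (Conj (Neg (inIf 0 1 4)) stored4)
                     (Conj (inIf 0 1 4) (Conj (guardf 2 4) (Exi 4 (Conj (succf 4 5) (newOpt 0 4 1 2 5 3)))))) \<longleftrightarrow> bit (sv n kk x' s t b) j"
      using A1 A2 False by simp
  next
    case True
    show "sat N I [i] e (FOr (Conj (Neg (inIf 0 1 4)) stored4)
                     (Conj (inIf 0 1 4) (Conj (guardf 2 4) (Exi 4 (Conj (succf 4 5) (newOpt 0 4 1 2 5 3)))))) \<longleftrightarrow> bit (sv n kk x' s t b) j"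
    proof (cases "b + n < N")
      case g: True
      then have bm: "b < 2 ^ Suc kk" using NN by simp
      have "bit (min (Max {Gv n kk x p w s i (Suc i) t b1 b2 b3 | b1 b2 b3. b1 + b2 + b3 = b}) (2 ^ n)) j \<longleftrightarrow> bit (sv n kk x' s t b) j"
        using newopt_val[of s i t b kk n x p w] True bm xx by simp
      then show ?thesis using A1 A3 A45 True g by simp
    next
      case g: False
      then have "sv n kk x' s t b = 0" using NN unfolding sv_def by simp
      then show ?thesis using A1 A3 True g by simp
    qed
  qed
  qed
qed


lemma step_B:
  assumes n1: "1 \<le> n" and inv: "Inv n kk x aux" and vv: "vv < 2 ^ n" and Bk: "kB x' \<le> kk"
    and NN: "N = n + 2 ^ Suc kk" and II: "I = ks_struct n x aux (advf kk) [bitset n vv]"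
    and xx: "x' = ks_apply (ChB vv) x"
  shows "sat N I [] (\<lambda>_. 0) (updf OpB 0) \<longleftrightarrow> knapsack n x'"
    and "s < N \<Longrightarrow> t < N \<Longrightarrow> b < N \<Longrightarrow> j < N \<Longrightarrow>
         sat N I [] (\<lambda>v. if v < 4 then [s, t, b, j] ! v else 0) (updf OpB 1) \<longleftrightarrow> bit (sv n kk x' s t b) j"
proof -
  have nN: "n < N" using NN by simp
  have m1: "kk < 2 ^ Suc kk" using less_exp[of "Suc kk"] by simp
  have invs: "kB x < 2 ^ n" "kT x < 2 ^ n" "aux 1 = auxrel n kk x" "\<And>i. n \<le> i \<Longrightarrow> kp x i = 0 \<and> kw x i = 0"
    using inv unfolding Inv_def by auto
  have adv: "I (SAdv 0) = advI n kk" unfolding II by (rule struct_facts)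
  have IRa: "\<And>vs j. (vs @ [j] \<in> I (SAux 1)) = (length vs = 3 \<and> (\<forall>v\<in>set vs. v < N) \<and> j < N \<and> bit (svf n kk x vs) j)"
    unfolding II struct_facts invs(3) IR_aux NN ..
  have L3: "length [V 0, V 1, V 2] = (3::nat)" by simp
  have IR3: "\<And>vs j. (vs @ [j] \<in> I (SAux 1)) = (length vs = length [V 0, V 1, V 2] \<and> (\<forall>v\<in>set vs. v < N) \<and> j < N \<and> bit (svf n kk x vs) j)"
    unfolding L3 by (rule IRa)
  have IRv: "\<And>vs j. (vs @ [j] \<in> I (SCh 0)) = (length vs = length ([]::tm list) \<and> (\<forall>v\<in>set vs. v < N) \<and> j < N \<and> bit vv j)"
    unfolding II using struct_facts(5)[of 0 "[bitset n vv]"] bitset_rel IR_unary[OF vv nN] by simp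
  have IRB: "\<And>vs j. (vs @ [j] \<in> I SB) = (length vs = length ([]::tm list) \<and> (\<forall>v\<in>set vs. v < N) \<and> j < N \<and> bit (kB x) j)"
    unfolding II struct_facts using IR_unary[OF invs(1) nN] by simp
  have IRT: "\<And>vs j. (vs @ [j] \<in> I ST) = (length vs = length ([]::tm list) \<and> (\<forall>v\<in>set vs. v < N) \<and> j < N \<and> bit (kT x) j)"
    unfolding II struct_facts using IR_unary[OF invs(2) nN] by simp
  have p3: "3 * 2 ^ n < (2::nat) ^ N" by (rule pow_N[OF NN])
  have BN: "kB x < 2 ^ N" "kT x < 2 ^ N" "vv < 2 ^ N" using invs(1,2) vv p3 by linarith+
  have ceN: "\<forall>x\<in>set []. x < N" by simp
  have N0: "0 < N" using nN by simp
  have svN: "svf n kk x vs < 2 ^ N" for vs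
  proof -
    have "sv n kk x s t b < 2 ^ N" for s t b using sv_le[of n kk x s t b] p3 by linarith
    then show ?thesis unfolding svf_def by (auto split: list.splits)
  qed
  have Bg: "numg N I [] k (auxg SB []) (\<lambda>e. kB x)" for k
    using auxg[where I=I and R=SB and ts="[]" and f="\<lambda>_. kB x", OF IRB _ _ ceN N0] BN by simp
  have Tg: "numg N I [] k (auxg ST []) (\<lambda>e. kT x)" for k
    using auxg[where I=I and R=ST and ts="[]" and f="\<lambda>_. kT x", OF IRT _ _ ceN N0] BN by simp
  have Vg: "numg N I [] k (auxg (SCh 0) []) (\<lambda>e. vv)" for k
    using auxg[where I=I and R="SCh 0" and ts="[]" and f="\<lambda>_. vv", OF IRv _ _ ceN N0] BN by simp
  have Ag: "numg N I [] 3 (auxg (SAux 1) [V 0, V 1, V 2]) (\<lambda>e. sv n kk x (e 0) (e 1) (e 2))"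
    using auxg[where I=I and R="SAux 1" and ts="[V 0, V 1, V 2]" and k=3, OF IR3 svN _ ceN N0]
    by (simp add: svf_def)
  have x'eq: "\<And>i'. kp x' i' = kp x i' \<and> kw x' i' = kw x i'" "kT x' = kT x" "kB x' = vv" unfolding xx by auto
  have svx: "sv n kk x s' t' b' = sv n kk x' s' t' b'" for s' t' b' by (rule sv_cong) (use x'eq in auto)
  let ?Q = "\<lambda>s t b. \<not> sv n kk x s t b < kT x"
  have Rg: "boolg N I [] 3 (\<lambda>l. Neg (ltg (auxg (SAux 1) [V 0, V 1, V 2]) (auxg ST []) l)) (\<lambda>e. ?Q (e 0) (e 1) (e 2))"
    using ltg[OF Ag Tg] unfolding boolg_def dep_def by auto
  have "sat N I [] (\<lambda>_. 0) (updf OpB 0) \<longleftrightarrow> ?Q 0 (N - 1) vv"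
  proof -
    have "updf OpB 0 = Qform (auxg (SCh 0) []) (\<lambda>l. Neg (ltg (auxg (SAux 1) [V 0, V 1, V 2]) (auxg ST []) l))"
      unfolding updf_def by simp
    moreover have "vv < 2 ^ Suc kk" using Bk m1 x'eq by linarith
    ultimately show ?thesis using Qform_sem[OF adv NN Vg _ Rg] by simp
  qed
  also have "\<dots> \<longleftrightarrow> \<not> sv n kk x' 0 (N - 1) (kB x') < kT x'"
    using svx x'eq by simp
  also have "\<dots> \<longleftrightarrow> knapsack n x'"
    by (rule knap_iff[OF _ _ _ NN]) (use x'eq invs Bk m1 vv in auto)
  finally show "sat N I [] (\<lambda>_. 0) (updf OpB 0) \<longleftrightarrow> knapsack n x'" .
  show "sat N I [] (\<lambda>v. if v < 4 then [s, t, b, j] ! v else 0) (updf OpB 1) \<longleftrightarrow> bit (sv n kk x' s t b) j"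
    if sN: "s < N" and tN: "t < N" and bN: "b < N" and jN: "j < N"
  proof -
    have "updf OpB 1 = stored4" unfolding updf_def by simp
    then show ?thesis using IRa[of "[s, t, b]" j] sN tN bN jN svx unfolding stored4_def by (simp add: svf_def)
  qed
qed

lemma step_T:
  assumes n1: "1 \<le> n" and inv: "Inv n kk x aux" and vv: "vv < 2 ^ n" and Bk: "kB x' \<le> kk"
    and NN: "N = n + 2 ^ Suc kk" and II: "I = ks_struct n x aux (advf kk) [bitset n vv]"
    and xx: "x' = ks_apply (ChT vv) x"
  shows "sat N I [] (\<lambda>_. 0) (updf OpT 0) \<longleftrightarrow> knapsack n x'"
    and "s < N \<Longrightarrow> t < N \<Longrightarrow> b < N \<Longrightarrow> j < N \<Longrightarrow>
         sat N I [] (\<lambda>v. if v < 4 then [s, t, b, j] ! v else 0) (updf OpT 1) \<longleftrightarrow> bit (sv n kk x' s t b) j"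
proof -
  have nN: "n < N" using NN by simp
  have m1: "kk < 2 ^ Suc kk" using less_exp[of "Suc kk"] by simp
  have invs: "kB x < 2 ^ n" "kT x < 2 ^ n" "aux 1 = auxrel n kk x" "\<And>i. n \<le> i \<Longrightarrow> kp x i = 0 \<and> kw x i = 0"
    using inv unfolding Inv_def by auto
  have adv: "I (SAdv 0) = advI n kk" unfolding II by (rule struct_facts)
  have IRa: "\<And>vs j. (vs @ [j] \<in> I (SAux 1)) = (length vs = 3 \<and> (\<forall>v\<in>set vs. v < N) \<and> j < N \<and> bit (svf n kk x vs) j)"
    unfolding II struct_facts invs(3) IR_aux NN ..
  have L3: "length [V 0, V 1, V 2] = (3::nat)" by simp
  have IR3: "\<And>vs j. (vs @ [j] \<in> I (SAux 1)) = (length vs = length [V 0, V 1, V 2] \<and> (\<forall>v\<in>set vs. v < N) \<and> j < N \<and> bit (svf n kk x vs) j)"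
    unfolding L3 by (rule IRa)
  have IRv: "\<And>vs j. (vs @ [j] \<in> I (SCh 0)) = (length vs = length ([]::tm list) \<and> (\<forall>v\<in>set vs. v < N) \<and> j < N \<and> bit vv j)"
    unfolding II using struct_facts(5)[of 0 "[bitset n vv]"] bitset_rel IR_unary[OF vv nN] by simp
  have IRB: "\<And>vs j. (vs @ [j] \<in> I SB) = (length vs = length ([]::tm list) \<and> (\<forall>v\<in>set vs. v < N) \<and> j < N \<and> bit (kB x) j)"
    unfolding II struct_facts using IR_unary[OF invs(1) nN] by simp
  have IRT: "\<And>vs j. (vs @ [j] \<in> I ST) = (length vs = length ([]::tm list) \<and> (\<forall>v\<in>set vs. v < N) \<and> j < N \<and> bit (kT x) j)"
    unfolding II struct_facts using IR_unary[OF invs(2) nN] by simp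
  have p3: "3 * 2 ^ n < (2::nat) ^ N" by (rule pow_N[OF NN])
  have BN: "kB x < 2 ^ N" "kT x < 2 ^ N" "vv < 2 ^ N" using invs(1,2) vv p3 by linarith+
  have ceN: "\<forall>x\<in>set []. x < N" by simp
  have N0: "0 < N" using nN by simp
  have svN: "svf n kk x vs < 2 ^ N" for vs
  proof -
    have "sv n kk x s t b < 2 ^ N" for s t b using sv_le[of n kk x s t b] p3 by linarith
    then show ?thesis unfolding svf_def by (auto split: list.splits)
  qed
  have Bg: "numg N I [] k (auxg SB []) (\<lambda>e. kB x)" for k
    using auxg[where I=I and R=SB and ts="[]" and f="\<lambda>_. kB x", OF IRB _ _ ceN N0] BN by simp
  have Tg: "numg N I [] k (auxg ST []) (\<lambda>e. kT x)" for k
    using auxg[where I=I and R=ST and ts="[]" and f="\<lambda>_. kT x", OF IRT _ _ ceN N0] BN by simp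
  have Vg: "numg N I [] k (auxg (SCh 0) []) (\<lambda>e. vv)" for k
    using auxg[where I=I and R="SCh 0" and ts="[]" and f="\<lambda>_. vv", OF IRv _ _ ceN N0] BN by simp
  have Ag: "numg N I [] 3 (auxg (SAux 1) [V 0, V 1, V 2]) (\<lambda>e. sv n kk x (e 0) (e 1) (e 2))"
    using auxg[where I=I and R="SAux 1" and ts="[V 0, V 1, V 2]" and k=3, OF IR3 svN _ ceN N0]
    by (simp add: svf_def)
  have x'eq: "\<And>i'. kp x' i' = kp x i' \<and> kw x' i' = kw x i'" "kB x' = kB x" "kT x' = vv" unfolding xx by auto
  have svx: "sv n kk x s' t' b' = sv n kk x' s' t' b'" for s' t' b' by (rule sv_cong) (use x'eq in auto)
  let ?Q = "\<lambda>s t b. \<not> sv n kk x s t b < vv"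
  have Rg: "boolg N I [] 3 (\<lambda>l. Neg (ltg (auxg (SAux 1) [V 0, V 1, V 2]) (auxg (SCh 0) []) l)) (\<lambda>e. ?Q (e 0) (e 1) (e 2))"
    using ltg[OF Ag Vg] unfolding boolg_def dep_def by auto
  have "sat N I [] (\<lambda>_. 0) (updf OpT 0) \<longleftrightarrow> ?Q 0 (N - 1) (kB x)"
  proof -
    have "updf OpT 0 = Qform (auxg SB []) (\<lambda>l. Neg (ltg (auxg (SAux 1) [V 0, V 1, V 2]) (auxg (SCh 0) []) l))"
      unfolding updf_def by simp
    moreover have "kB x < 2 ^ Suc kk" using Bk m1 x'eq by linarith
    ultimately show ?thesis using Qform_sem[OF adv NN Bg _ Rg] by simp
  qed
  also have "\<dots> \<longleftrightarrow> \<not> sv n kk x' 0 (N - 1) (kB x') < kT x'"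
    using svx x'eq by simp
  also have "\<dots> \<longleftrightarrow> knapsack n x'"
    by (rule knap_iff[OF _ _ _ NN]) (use x'eq invs Bk m1 vv in auto)
  finally show "sat N I [] (\<lambda>_. 0) (updf OpT 0) \<longleftrightarrow> knapsack n x'" .
  show "sat N I [] (\<lambda>v. if v < 4 then [s, t, b, j] ! v else 0) (updf OpT 1) \<longleftrightarrow> bit (sv n kk x' s t b) j"
    if sN: "s < N" and tN: "t < N" and bN: "b < N" and jN: "j < N"
  proof -
    have "updf OpT 1 = stored4" unfolding updf_def by simp
    then show ?thesis using IRa[of "[s, t, b]" j] sN tN bN jN svx unfolding stored4_def by (simp add: svf_def)
  qed
qed


lemma step_sem:
  assumes n1: "1 \<le> n" and inv: "Inv n kk x aux" and vc: "ks_valid n c" and Bk: "kB (ks_apply c x) \<le> kk"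
    and NN: "N = n + 2 ^ Suc kk" and II: "I = ks_struct n x aux (advf kk) (ks_sets n c)"
  shows "sat N I (ks_elems c) (\<lambda>_. 0) (updf (ks_op_of c) 0) \<longleftrightarrow> knapsack n (ks_apply c x)"
    and "s < N \<Longrightarrow> t < N \<Longrightarrow> b < N \<Longrightarrow> j < N \<Longrightarrow>
       sat N I (ks_elems c) (\<lambda>v. if v < 4 then [s, t, b, j] ! v else 0) (updf (ks_op_of c) 1) \<longleftrightarrow> bit (sv n kk (ks_apply c x) s t b) j"
proof -
  have "(sat N I (ks_elems c) (\<lambda>_. 0) (updf (ks_op_of c) 0) \<longleftrightarrow> knapsack n (ks_apply c x)) \<and>
    (s < N \<longrightarrow> t < N \<longrightarrow> b < N \<longrightarrow> j < N \<longrightarrow>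
       (sat N I (ks_elems c) (\<lambda>v. if v < 4 then [s, t, b, j] ! v else 0) (updf (ks_op_of c) 1) \<longleftrightarrow> bit (sv n kk (ks_apply c x) s t b) j))"
  proof (cases c)
    case (ChItem i p w)
    have kb: "kB x \<le> kk" using Bk ChItem by simp
    show ?thesis using step_item[OF n1 inv _ _ _ kb NN, of i p w] vc II ChItem by simp
  next
    case (ChB v)
    show ?thesis using step_B[OF n1 inv _ _ NN, of v] vc II ChB Bk by simp
  next
    case (ChT v)
    show ?thesis using step_T[OF n1 inv _ _ NN, of v] vc II ChT Bk by simp
  qed
  then show "sat N I (ks_elems c) (\<lambda>_. 0) (updf (ks_op_of c) 0) \<longleftrightarrow> knapsack n (ks_apply c x)"
    and "s < N \<Longrightarrow> t < N \<Longrightarrow> b < N \<Longrightarrow> j < N \<Longrightarrow>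
       sat N I (ks_elems c) (\<lambda>v. if v < 4 then [s, t, b, j] ! v else 0) (updf (ks_op_of c) 1) \<longleftrightarrow> bit (sv n kk (ks_apply c x) s t b) j"
    by blast+
qed

lemma len4: "length l = 4 \<Longrightarrow> \<exists>s t b j. l = [s, t, b, j]"
  by (cases l; simp; rename_tac l1; case_tac l1; simp; rename_tac l2; case_tac l2; simp; rename_tac l3; case_tac l3; simp)

lemma valid_bounds:
  assumes "Inv n kk x aux" "ks_valid n c"
  shows "(\<forall>i. kp (ks_apply c x) i < 2 ^ n \<and> kw (ks_apply c x) i < 2 ^ n) \<and>
    (\<forall>i. n \<le> i \<longrightarrow> kp (ks_apply c x) i = 0 \<and> kw (ks_apply c x) i = 0) \<and>
    kB (ks_apply c x) < 2 ^ n \<and> kT (ks_apply c x) < 2 ^ n"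
  using assms unfolding Inv_def by (cases c) auto

lemma step_all:
  assumes n1: "1 \<le> n" and inv: "Inv n kk x aux" and vc: "ks_valid n c" and Bk: "kB (ks_apply c x) \<le> kk"
  shows "fst (ks_step [0, 4] updf n (advf kk) c (x, aux)) = ks_apply c x"
    and "Inv n kk (ks_apply c x) (snd (ks_step [0, 4] updf n (advf kk) c (x, aux)))"
    and "[] \<in> snd (ks_step [0, 4] updf n (advf kk) c (x, aux)) 0 \<longleftrightarrow> knapsack n (ks_apply c x)"
proof -
  define N where "N = n + 2 ^ Suc kk"
  define I where "I = ks_struct n x aux (advf kk) (ks_sets n c)"
  have fa: "fst (advf kk) = 2 ^ Suc kk" unfolding advf_def by simp
  have S0: "ks_step [0, 4] updf n (advf kk) c (x, aux) = (ks_apply c x, \<lambda>j. if j < length [0::nat, 4] then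
              {t. length t = [0::nat, 4] ! j \<and> (\<forall>v\<in>set t. v < n + fst (advf kk)) \<and>
                  sat (n + fst (advf kk)) (ks_struct n x aux (advf kk) (ks_sets n c)) (ks_elems c) (\<lambda>v. if v < length t then t ! v else 0) (updf (ks_op_of c) j)}
            else {})"
    by (simp only: ks_step_def Let_def case_prod_conv)
  have S: "ks_step [0, 4] updf n (advf kk) c (x, aux) = (ks_apply c x, \<lambda>j. if j < length [0::nat, 4] then
              {t. length t = [0::nat, 4] ! j \<and> (\<forall>v\<in>set t. v < N) \<and>
                  sat N I (ks_elems c) (\<lambda>v. if v < length t then t ! v else 0) (updf (ks_op_of c) j)}
            else {})"
    unfolding S0 fa N_def I_def ..
  show "fst (ks_step [0, 4] updf n (advf kk) c (x, aux)) = ks_apply c x" unfolding S by simp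
  have A1: "snd (ks_step [0, 4] updf n (advf kk) c (x, aux)) 1 = auxrel n kk (ks_apply c x)"
  proof -
    have "l \<in> {t. length t = 4 \<and> (\<forall>v\<in>set t. v < N) \<and>
                  sat N I (ks_elems c) (\<lambda>v. if v < length t then t ! v else 0) (updf (ks_op_of c) 1)}
          \<longleftrightarrow> l \<in> auxrel n kk (ks_apply c x)" for l
    proof
      assume "l \<in> {t. length t = 4 \<and> (\<forall>v\<in>set t. v < N) \<and>
                  sat N I (ks_elems c) (\<lambda>v. if v < length t then t ! v else 0) (updf (ks_op_of c) 1)}"
      then have h: "length l = 4" "\<forall>v\<in>set l. v < N" "sat N I (ks_elems c) (\<lambda>v. if v < 4 then l ! v else 0) (updf (ks_op_of c) 1)"
        by auto
      obtain s t b j where l: "l = [s, t, b, j]" using len4[OF h(1)] by blast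
      have lt: "s < N" "t < N" "b < N" "j < N" using h(2) l by auto
      have "bit (sv n kk (ks_apply c x) s t b) j"
        using step_sem(2)[OF n1 inv vc Bk N_def I_def lt] h(3)[unfolded l] by simp
      then show "l \<in> auxrel n kk (ks_apply c x)" unfolding auxrel_def l using lt N_def by auto
    next
      assume "l \<in> auxrel n kk (ks_apply c x)"
      then obtain s t b j where l: "l = [s, t, b, j]" and lt: "s < N" "t < N" "b < N" "j < N"
        and bt: "bit (sv n kk (ks_apply c x) s t b) j" unfolding auxrel_def N_def by blast
      have "sat N I (ks_elems c) (\<lambda>v. if v < 4 then [s, t, b, j] ! v else 0) (updf (ks_op_of c) 1)"
        using step_sem(2)[OF n1 inv vc Bk N_def I_def lt] bt by simp
      then show "l \<in> {t. length t = 4 \<and> (\<forall>v\<in>set t. v < N) \<and>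
                  sat N I (ks_elems c) (\<lambda>v. if v < length t then t ! v else 0) (updf (ks_op_of c) 1)}"
        using l lt by (simp add: numeral_eq_Suc)
    qed
    then show ?thesis unfolding S by auto
  qed
  show "Inv n kk (ks_apply c x) (snd (ks_step [0, 4] updf n (advf kk) c (x, aux)))"
    unfolding Inv_def using A1 valid_bounds[OF inv vc] by simp
  have "[] \<in> snd (ks_step [0, 4] updf n (advf kk) c (x, aux)) 0 \<longleftrightarrow>
      sat N I (ks_elems c) (\<lambda>_. 0) (updf (ks_op_of c) 0)"
    unfolding S by simp
  also have "\<dots> \<longleftrightarrow> knapsack n (ks_apply c x)" by (rule step_sem(1)[OF n1 inv vc Bk N_def I_def])
  finally show "[] \<in> snd (ks_step [0, 4] updf n (advf kk) c (x, aux)) 0 \<longleftrightarrow> knapsack n (ks_apply c x)" .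
qed

lemma opt_empty: "opt ks_empty A b = 0"
proof -
  have "(\<lambda>S. \<Sum>i\<in>S. kp ks_empty i) ` {S. S \<subseteq> A \<and> (\<Sum>i\<in>S. kw ks_empty i) \<le> b} = {0}"
    unfolding ks_empty_def by auto
  then show ?thesis unfolding opt_def by simp
qed

lemma Inv_empty: "Inv n kk ks_empty (\<lambda>_. {})"
proof -
  have "auxrel n kk ks_empty = {}" unfolding auxrel_def sv_def opt_empty by simp
  then show ?thesis unfolding Inv_def by (simp add: ks_empty_def)
qed

lemma run_inv:
  assumes n1: "1 \<le> n" and vc: "\<forall>c\<in>set cs. ks_valid n c"
    and pre: "\<forall>l\<le>length cs. kB (fold ks_apply (take l cs) ks_empty) \<le> kk"
  shows "fst (ks_run [0, 4] updf n (advf kk) cs) = fold ks_apply cs ks_empty \<and>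
    Inv n kk (fst (ks_run [0, 4] updf n (advf kk) cs)) (snd (ks_run [0, 4] updf n (advf kk) cs)) \<and>
    (cs \<noteq> [] \<longrightarrow> ([] \<in> snd (ks_run [0, 4] updf n (advf kk) cs) 0 \<longleftrightarrow> knapsack n (fold ks_apply cs ks_empty)))"
  using vc pre
proof (induction cs rule: rev_induct)
  case Nil
  then show ?case unfolding ks_run_def using Inv_empty by simp
next
  case (snoc c cs)
  have vc': "\<forall>c\<in>set cs. ks_valid n c" using snoc.prems(1) by simp
  have pre': "\<forall>l\<le>length cs. kB (fold ks_apply (take l cs) ks_empty) \<le> kk"
  proof (intro allI impI)
    fix l assume l: "l \<le> length cs"
    then have "take l (cs @ [c]) = take l cs" by simp
    moreover have "l \<le> length (cs @ [c])" using l by simp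
    ultimately show "kB (fold ks_apply (take l cs) ks_empty) \<le> kk" using snoc.prems(2) by metis
  qed
  have IH: "fst (ks_run [0, 4] updf n (advf kk) cs) = fold ks_apply cs ks_empty \<and>
    Inv n kk (fst (ks_run [0, 4] updf n (advf kk) cs)) (snd (ks_run [0, 4] updf n (advf kk) cs))"
    using snoc.IH[OF vc' pre'] by blast
  obtain x aux where xa: "ks_run [0, 4] updf n (advf kk) cs = (x, aux)" by (cases "ks_run [0, 4] updf n (advf kk) cs")
  have x: "x = fold ks_apply cs ks_empty" and inv: "Inv n kk x aux" using IH xa by auto
  have run: "ks_run [0, 4] updf n (advf kk) (cs @ [c]) = ks_step [0, 4] updf n (advf kk) c (x, aux)"
    using xa unfolding ks_run_def by simp
  have vcc: "ks_valid n c" using snoc.prems(1) by simp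
  have Bk: "kB (ks_apply c x) \<le> kk"
    using snoc.prems(2) x by (metis fold_simps(1) fold_simps(2) fold_append le_refl length_append_singleton take_all_iff comp_def)
  have fx: "fold ks_apply (cs @ [c]) ks_empty = ks_apply c x" using x by simp
  show ?case unfolding run fx using step_all[OF n1 inv vcc Bk] by simp
qed


lemma comp_f: "computable1 (\<lambda>k. 2 ^ Suc k)"
proof -
  have "reval (RComp rpow2 [RComp RS [RProj 0]]) [a] (2 ^ Suc a)" for a
    by (rule reval_comp1[OF reval_comp1[OF reval_proj reval_S] rpow2]) auto
  then show ?thesis unfolding computable1_def by blast
qed

lemma comp_adv: "computable_advice [2] advf"
proof -
  have "(\<lambda>k. fst (advf k)) = (\<lambda>k. 2 ^ Suc k)" unfolding advf_def by simp
  moreover have "computable2 (\<lambda>k c. if list_decode c \<in> snd (advf k) 0 then 1 else 0)"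
  proof -
    have e: "(if list_decode b \<in> snd (advf a) 0 then 1 else 0) = (if list_decode b \<in> advrel a then (1::nat) else 0)" for a b
      by (simp add: advf_def)
    show ?thesis unfolding computable2_def e by (rule exI[of _ rmem], intro allI, rule rmem)
  qed
  ultimately show ?thesis unfolding computable_advice_def using comp_f by simp
qed

lemma wf_adv: "wf_advice [2] (advf k) \<and> fst (advf k) \<le> 2 ^ Suc k"
proof -
  have "j' < 2 ^ Suc k" "(2::nat) ^ j' < 2 ^ Suc k" if "j' \<le> k" for j'
  proof -
    have "j' < Suc k" using that by simp
    then show "(2::nat) ^ j' < 2 ^ Suc k" by (rule power_strict_increasing) simp
    then show "j' < 2 ^ Suc k" using less_exp[of j'] by linarith
  qed
  then show ?thesis unfolding wf_advice_def advf_def advrel_def by auto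
qed

theorem proposition16:
  shows "knapsack_in_ParaSD"
  unfolding knapsack_in_ParaSD_def
proof (intro exI conjI allI impI)
  show "[0::nat, 4] \<noteq> []" by simp
  show "[0::nat, 4] ! 0 = 0" by simp
  show "computable1 (\<lambda>k. 2 ^ Suc k)" by (rule comp_f)
  show "computable_advice [2] advf" by (rule comp_adv)
  fix k show "wf_advice [2] (advf k)" using wf_adv by blast
  show "fst (advf k) \<le> 2 ^ Suc k" using wf_adv by blast
next
  fix n kmax cs
  assume n1: "1 \<le> n" and ne: "cs \<noteq> []" and vc: "\<forall>c\<in>set cs. ks_valid n c"
    and pre: "\<forall>l\<le>length cs. kB (fold ks_apply (take l cs) ks_empty) \<le> kmax"
  show "([] \<in> snd (ks_run [0, 4] updf n (advf kmax) cs) 0) = knapsack n (fold ks_apply cs ks_empty)"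
    using run_inv[OF n1 vc pre] ne by blast
qed


end
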